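(* Let $d\ge2$ and let $A\in\mathcal{B}(\mathbb{C}^d)$ be positive definite with eigenvalues $t_1,\dots,t_d>0$ counted with multiplicity. The following are equivalent: (i) $A=A_{T,C}$ for some power bounded $T\in\mathcal{B}(\mathbb{C}^d)$ of class $C_{11}$; (ii) $\frac1{t_1}+\dots+\frac1{t_d}=d$; (iii) there is an invertible $S\in\mathcal{B}(\mathbb{C}^d)$ all of whose column vectors are unit vectors such that $A=S^{*-1}S^{-1}=(SS^* )^{-1}$.
   Context: For a power bounded matrix $T$, the Cesàro asymptotic limit is $A_{T,C}=\lim_{n\to\infty}\frac1n\sum_{j=1}^nT^{*j}T^j$ (this limit exists). For a power bounded $T$, $\mathcal{H}_0(T)=\{x:\|T^nx\|\to0\}$; $T$ is of class $C_{1\cdot}$ if $\mathcal{H}_0(T)=\{0\}$, of class $C_{\cdot1}$ if $T^*$ is of class $C_{1\cdot}$, and of class $C_{11}$ if both hold. *)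

theory Defs
  imports "Jordan_Normal_Form.Matrix" "Jordan_Normal_Form.Char_Poly"
          "Jordan_Normal_Form.Schur_Decomposition"
begin

definition cvec_norm :: "complex vec \<Rightarrow> real" where
  "cvec_norm v = sqrt (Re (v \<bullet>c v))"

definition power_bounded :: "nat \<Rightarrow> complex mat \<Rightarrow> bool" where
  "power_bounded d T \<longleftrightarrow> T \<in> carrier_mat d d \<and>
     (\<exists>C. \<forall>n. \<forall>v \<in> carrier_vec d. cvec_norm ((T ^\<^sub>m n) *\<^sub>v v) \<le> C * cvec_norm v)"

definition H0 :: "nat \<Rightarrow> complex mat \<Rightarrow> complex vec set" where
  "H0 d T = {x \<in> carrier_vec d. (\<lambda>n. cvec_norm ((T ^\<^sub>m n) *\<^sub>v x)) \<longlonglongrightarrow> 0}"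

definition class_C1dot :: "nat \<Rightarrow> complex mat \<Rightarrow> bool" where
  "class_C1dot d T \<longleftrightarrow> H0 d T = {0\<^sub>v d}"

definition class_Cdot1 :: "nat \<Rightarrow> complex mat \<Rightarrow> bool" where
  "class_Cdot1 d T \<longleftrightarrow> class_C1dot d (mat_adjoint T)"

definition class_C11 :: "nat \<Rightarrow> complex mat \<Rightarrow> bool" where
  "class_C11 d T \<longleftrightarrow> class_C1dot d T \<and> class_Cdot1 d T"

text \<open>A is the Cesaro asymptotic limit of T: (1/n) sum_{j=1..n} T*^j T^j tends to A
  (entrywise, equivalently in any norm on the finite-dimensional matrix space).\<close>
definition is_cesaro_limit :: "nat \<Rightarrow> complex mat \<Rightarrow> complex mat \<Rightarrow> bool" where
  "is_cesaro_limit d T A \<longleftrightarrow> A \<in> carrier_mat d d \<and>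
     (\<forall>i<d. \<forall>k<d. (\<lambda>n. (1 / of_nat n) *
        (\<Sum>j=1..n. ((mat_adjoint T ^\<^sub>m j) * (T ^\<^sub>m j)) $$ (i,k))) \<longlonglongrightarrow> A $$ (i,k))"

definition positive_definite :: "nat \<Rightarrow> complex mat \<Rightarrow> bool" where
  "positive_definite d A \<longleftrightarrow> A \<in> carrier_mat d d \<and> mat_adjoint A = A \<and>
     (\<forall>v \<in> carrier_vec d. v \<noteq> 0\<^sub>v d \<longrightarrow> Re ((A *\<^sub>v v) \<bullet>c v) > 0)"

end

theory Submission imports Defs begin

lemma madj_dims[simp]: "dim_row (mat_adjoint M) = dim_col M" "dim_col (mat_adjoint M) = dim_row M"
  unfolding mat_adjoint_def by simp_all

lemma madj_carrier[simp]: "M \<in> carrier_mat n m \<Longrightarrow> mat_adjoint M \<in> carrier_mat m n"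
  unfolding carrier_mat_def by simp

lemma madj_index[simp]: "i < dim_col M \<Longrightarrow> j < dim_row M \<Longrightarrow> mat_adjoint M $$ (i,j) = cnj (M $$ (j,i))"
  unfolding mat_adjoint_def by (subst mat_of_rows_index) auto

lemma mult_index_sum: "i < dim_row A \<Longrightarrow> j < dim_col B \<Longrightarrow> dim_col A = dim_row B \<Longrightarrow>
   (A * B) $$ (i,j) = (\<Sum>k<dim_row B. A $$ (i,k) * B $$ (k,j))"
  by (simp add: scalar_prod_def atLeast0LessThan)

lemma madj_mult: fixes A B :: "complex mat"
  assumes "dim_col A = dim_row B"
  shows "mat_adjoint (A * B) = mat_adjoint B * mat_adjoint A"
proof (rule eq_matI)
  fix i j assume i: "i < dim_row (mat_adjoint B * mat_adjoint A)" and j: "j < dim_col (mat_adjoint B * mat_adjoint A)"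
  then have i': "i < dim_col B" and j': "j < dim_row A" by auto
  have "mat_adjoint (A * B) $$ (i,j) = cnj ((A*B) $$ (j,i))" using i' j' by simp
  also have "\<dots> = cnj (\<Sum>k<dim_row B. A $$ (j,k) * B $$ (k,i))" using i' j' assms by (subst mult_index_sum) auto
  also have "\<dots> = (\<Sum>k<dim_row B. cnj (B $$ (k,i)) * cnj (A $$ (j,k)))" by (simp add: mult.commute)
  also have "\<dots> = (mat_adjoint B * mat_adjoint A) $$ (i,j)" using i' j' assms
    by (subst mult_index_sum) auto
  finally show "mat_adjoint (A * B) $$ (i,j) = (mat_adjoint B * mat_adjoint A) $$ (i,j)" .
qed simp_all

lemma madj_madj[simp]: fixes A :: "complex mat" shows "mat_adjoint (mat_adjoint A) = A"
  by (rule eq_matI) simp_all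

lemma madj_one[simp]: "mat_adjoint (1\<^sub>m n :: complex mat) = 1\<^sub>m n"
  by (rule eq_matI) simp_all

lemma adj_mult_index: fixes X Y :: "complex mat"
  assumes "X \<in> carrier_mat n m" "Y \<in> carrier_mat n k" "i < m" "j < k"
  shows "(mat_adjoint X * Y) $$ (i,j) = col Y j \<bullet>c col X i"
  using assms by (simp add: mult_index_sum scalar_prod_def atLeast0LessThan mult.commute)

lemma cdot_self: "v \<bullet>c v = complex_of_real (\<Sum>i<dim_vec v. (cmod (v$i))^2)"
proof -
  have "v \<bullet>c v = (\<Sum>i<dim_vec v. v$i * cnj (v$i))"
    by (simp add: scalar_prod_def atLeast0LessThan)
  also have "\<dots> = (\<Sum>i<dim_vec v. complex_of_real ((cmod (v$i))^2))"
    by (intro sum.cong refl) (metis complex_norm_square of_real_power)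
  finally show ?thesis by simp
qed

lemma cvec_norm_sum: "cvec_norm v = sqrt (\<Sum>i<dim_vec v. (cmod (v$i))^2)"
  unfolding cvec_norm_def cdot_self by simp

lemma cvec_norm_nonneg: "cvec_norm v \<ge> 0"
  unfolding cvec_norm_sum by (intro real_sqrt_ge_zero sum_nonneg) simp

lemma cvec_norm_sq: "complex_of_real ((cvec_norm v)^2) = v \<bullet>c v"
proof -
  have "0 \<le> (\<Sum>i<dim_vec v. (cmod (v$i))^2)" by (intro sum_nonneg) simp
  then show ?thesis unfolding cvec_norm_sum cdot_self by simp
qed

lemma cvec_norm_zero_iff: "v \<in> carrier_vec n \<Longrightarrow> cvec_norm v = 0 \<longleftrightarrow> v = 0\<^sub>v n"
proof -
  assume v: "v \<in> carrier_vec n"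
  have "cvec_norm v = 0 \<longleftrightarrow> v \<bullet>c v = 0"
    using cvec_norm_sq[of v] cvec_norm_nonneg[of v]
    by (metis of_real_eq_0_iff power_eq_0_iff zero_less_numeral)
  also have "\<dots> \<longleftrightarrow> v = 0\<^sub>v n" using v by (rule conjugate_square_eq_0_vec)
  finally show ?thesis .
qed

lemma cdot_smult_real: assumes "v \<in> carrier_vec n" "w \<in> carrier_vec n"
  shows "(complex_of_real r \<cdot>\<^sub>v v) \<bullet>c (complex_of_real s \<cdot>\<^sub>v w) = complex_of_real (r*s) * (v \<bullet>c w)"
  using assms by (simp add: scalar_prod_def sum_distrib_left algebra_simps)

lemma cdot_smult_left: assumes "v \<in> carrier_vec n" "w \<in> carrier_vec n"
  shows "(c \<cdot>\<^sub>v v) \<bullet>c w = c * (v \<bullet>c w)"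
  using assms by (simp add: scalar_prod_def sum_distrib_left algebra_simps)

section \<open>Unitary Schur decomposition\<close>

definition unitary_mat :: "nat \<Rightarrow> complex mat \<Rightarrow> bool" where
  "unitary_mat n U \<longleftrightarrow> U \<in> carrier_mat n n \<and> mat_adjoint U * U = 1\<^sub>m n \<and> U * mat_adjoint U = 1\<^sub>m n"

lemma mult_carrier_sq[simp]: "A \<in> carrier_mat n n \<Longrightarrow> B \<in> carrier_mat n n \<Longrightarrow> A * B \<in> carrier_mat n n"
  by (rule mult_carrier_mat)

lemma unitaryI: assumes "U \<in> carrier_mat n n" "mat_adjoint U * U = 1\<^sub>m n"
  shows "unitary_mat n U"
  using assms mat_mult_left_right_inverse[of "mat_adjoint U" n U] unfolding unitary_mat_def by auto

lemma normalize_vec: fixes v :: "complex vec"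
  assumes v: "v \<in> carrier_vec n" "v \<noteq> 0\<^sub>v n"
  defines "w \<equiv> complex_of_real (1 / cvec_norm v) \<cdot>\<^sub>v v"
  shows "w \<in> carrier_vec n" "w \<bullet>c w = 1" "cvec_norm w = 1"
proof -
  show w: "w \<in> carrier_vec n" using v unfolding w_def by simp
  have N: "cvec_norm v > 0" using cvec_norm_zero_iff[OF v(1)] v(2) cvec_norm_nonneg[of v] by auto
  have "w \<bullet>c w = complex_of_real (1 / cvec_norm v * (1 / cvec_norm v)) * (v \<bullet>c v)"
    unfolding w_def by (rule cdot_smult_real[OF v(1) v(1)])
  also have "\<dots> = complex_of_real (1 / cvec_norm v * (1 / cvec_norm v)) * complex_of_real ((cvec_norm v)^2)"
    by (simp only: cvec_norm_sq)
  also have "\<dots> = 1" using N by (simp add: power2_eq_square flip: of_real_mult)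
  finally show w1: "w \<bullet>c w = 1" .
  show "cvec_norm w = 1" unfolding cvec_norm_def w1 by simp
qed

lemma unitary_schur:
  assumes "A \<in> carrier_mat n n" "char_poly A = (\<Prod>e\<leftarrow>es. [:- e, 1:])"
  shows "\<exists>U. unitary_mat n U \<and> upper_triangular (mat_adjoint U * A * U) \<and> diag_mat (mat_adjoint U * A * U) = es"
  using assms
proof (induct es arbitrary: n A)
  case Nil
  then have "n = 0" using degree_monic_char_poly[of A n] by auto
  then show ?case using Nil
    by (intro exI[of _ "1\<^sub>m 0"]) (auto simp: unitary_mat_def upper_triangular_def diag_mat_def)
next
  case (Cons e es n A)
  note A = Cons(2)
  let ?n1 = "n - 1"
  have cp: "char_poly A = [:-e,1:] * (\<Prod>e\<leftarrow>es. [:-e,1:])" using Cons(3) by simp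
  have mon: "monic (\<Prod>e\<leftarrow>es. [:- e, 1:])" by (rule monic_prod_list, auto)
  have deg: "degree (char_poly A) = Suc (degree (\<Prod>e\<leftarrow>es. [:- e, 1:]))" unfolding cp
    by (subst degree_mult_eq, insert mon, auto)
  with degree_monic_char_poly[OF A] have n: "n \<noteq> 0" by auto
  have n1: "1 + ?n1 = n" using n by auto
  have e: "eigenvalue A e" unfolding eigenvalue_root_char_poly[OF A] cp by simp
  define v0 where "v0 = find_eigenvector A e"
  from find_eigenvector[OF A e] have "eigenvector A v0 e" unfolding v0_def .
  then have v0: "v0 \<in> carrier_vec n" "v0 \<noteq> 0\<^sub>v n" "A *\<^sub>v v0 = e \<cdot>\<^sub>v v0"
    using A unfolding eigenvector_def by auto
  define v where "v = complex_of_real (1 / cvec_norm v0) \<cdot>\<^sub>v v0"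
  have v: "v \<in> carrier_vec n" "v \<bullet>c v = 1" "cvec_norm v = 1"
    using normalize_vec[OF v0(1,2)] unfolding v_def by auto
  have v_nz: "v \<noteq> 0\<^sub>v n" using v(1,3) cvec_norm_zero_iff[OF v(1)] by auto
  have Av: "A *\<^sub>v v = e \<cdot>\<^sub>v v" unfolding v_def using v0 A
    by (simp add: mult_mat_vec[of A n n] smult_smult_assoc mult.commute)
  interpret cof_vec_space n "TYPE(complex)" .
  define b where "b = basis_completion v"
  from basis_completion[OF v(1) v_nz, folded b_def]
  have dist_b: "distinct b" and indep: "\<not> lin_dep (set b)" and b: "set b \<subseteq> carrier_vec n" 
    and hdb: "hd b = v" and len_b: "length b = n" by auto
  from hdb len_b n obtain vs where bv: "b = v # vs" by (cases b, auto)
  define ws where "ws = gram_schmidt n b"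
  from gram_schmidt_result[OF b dist_b indep refl, folded ws_def]
  have ws: "set ws \<subseteq> carrier_vec n" "corthogonal ws" "length ws = n" by (auto simp: len_b)
  from gram_schmidt_hd[OF v(1), of vs, folded bv] have hdws: "hd ws = v" unfolding ws_def .
  have ws0: "ws ! 0 = v" using hdws ws(3) n by (cases ws) auto
  have wsc: "\<And>i. i < n \<Longrightarrow> ws ! i \<in> carrier_vec n" using ws by auto
  have ws_nz: "\<And>i. i < n \<Longrightarrow> ws ! i \<noteq> 0\<^sub>v n"
  proof
    fix i assume i: "i < n" and z: "ws ! i = 0\<^sub>v n"
    have "ws ! i \<bullet>c ws ! i \<noteq> 0" using corthogonalD[OF ws(2)] i ws(3) by auto
    then show False using z by simp
  qed
  define nrm where "nrm = (\<lambda>w::complex vec. complex_of_real (1 / cvec_norm w) \<cdot>\<^sub>v w)"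
  define us where "us = map nrm ws"
  have len_us: "length us = n" unfolding us_def using ws by simp
  have us_i: "\<And>i. i < n \<Longrightarrow> us ! i = nrm (ws ! i)" unfolding us_def using ws by simp
  have us_carr: "\<And>i. i < n \<Longrightarrow> us ! i \<in> carrier_vec n" using us_i wsc unfolding nrm_def by simp
  have us_orth: "\<And>i j. i < n \<Longrightarrow> j < n \<Longrightarrow> us ! i \<bullet>c us ! j = (if i = j then 1 else 0)"
  proof -
    fix i j assume i: "i < n" and j: "j < n"
    show "us ! i \<bullet>c us ! j = (if i = j then 1 else 0)"
    proof (cases "i = j")
      case True
      then show ?thesis using normalize_vec(2)[OF wsc[OF i] ws_nz[OF i]] us_i[OF i] unfolding nrm_def by simp
    next
      case False
      have "ws ! i \<bullet>c ws ! j = 0" using corthogonalD[OF ws(2)] i j ws(3) False by auto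
      then show ?thesis using False unfolding us_i[OF i] us_i[OF j] nrm_def cdot_smult_real[OF wsc[OF i] wsc[OF j]]
        by simp
    qed
  qed
  have us0: "us ! 0 = v" using us_i[of 0] n ws0 v(3) unfolding nrm_def by simp
  define W where "W = mat_of_cols n us"
  have W: "W \<in> carrier_mat n n" unfolding W_def using mat_of_cols_carrier(1)[of n us] len_us by simp
  have colW: "\<And>i. i < n \<Longrightarrow> col W i = us ! i" unfolding W_def using len_us us_carr by simp
  have WW: "mat_adjoint W * W = 1\<^sub>m n"
  proof (rule eq_matI)
    fix i j assume "i < dim_row (1\<^sub>m n :: complex mat)" "j < dim_col (1\<^sub>m n :: complex mat)"
    then have i: "i < n" and j: "j < n" by auto
    show "(mat_adjoint W * W) $$ (i,j) = 1\<^sub>m n $$ (i,j)"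
      using adj_mult_index[OF W W i j] colW[OF i] colW[OF j] us_orth[OF j i] i j by auto
  qed (use W in auto)
  have uW: "unitary_mat n W" by (rule unitaryI[OF W WW])
  have WW': "W * mat_adjoint W = 1\<^sub>m n" using uW unfolding unitary_mat_def by auto
  define A' where "A' = mat_adjoint W * A * W"
  have A': "A' \<in> carrier_mat n n" unfolding A'_def using W A by auto
  have col0: "\<And>i. i < n \<Longrightarrow> A' $$ (i,0) = (if i = 0 then e else 0)"
  proof -
    fix i assume i: "i < n"
    have "A' $$ (i,0) = (mat_adjoint W * (A * W)) $$ (i,0)" unfolding A'_def using assoc_mult_mat[OF madj_carrier[OF W] A W] by simp
    also have "\<dots> = col (A * W) 0 \<bullet>c col W i" using adj_mult_index[OF W _ i n[unfolded neq0_conv]] W A by simp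
    also have "col (A * W) 0 = A *\<^sub>v v" using col_mult2[OF A W] n colW[of 0] us0 by simp
    also have "\<dots> = e \<cdot>\<^sub>v v" by (rule Av)
    also have "(e \<cdot>\<^sub>v v) \<bullet>c col W i = e * (us ! 0 \<bullet>c us ! i)"
      using cdot_smult_left[OF v(1) us_carr[OF i]] colW[OF i] us0 by simp
    also have "\<dots> = (if i = 0 then e else 0)" using us_orth[of 0 i] i n by auto
    finally show "A' $$ (i,0) = (if i = 0 then e else 0)" .
  qed
  obtain A1 A2 A0 A3 where splitA': "split_block A' 1 1 = (A1,A2,A0,A3)"
    by (cases "split_block A' 1 1", auto)
  have dims: "dim_row A' = 1 + ?n1" "dim_col A' = 1 + ?n1" using A' n by auto
  note sb = split_block[OF splitA' dims]
  have A1: "A1 \<in> carrier_mat 1 1" and A2: "A2 \<in> carrier_mat 1 ?n1" and A0: "A0 \<in> carrier_mat ?n1 1"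
    and A3: "A3 \<in> carrier_mat ?n1 ?n1" and A'b: "A' = four_block_mat A1 A2 A0 A3" using sb by auto
  have A'idx: "\<And>i j. i < n \<Longrightarrow> j < n \<Longrightarrow> A' $$ (i,j) = (if i < 1 then if j < 1 then A1 $$ (i,j) else A2 $$ (i,j - 1)
      else if j < 1 then A0 $$ (i-1,j) else A3 $$ (i-1,j-1))"
    using A1 A2 A0 A3 n1 by (subst A'b) (subst index_mat_four_block, auto)
  have A0z: "A0 = 0\<^sub>m ?n1 1"
  proof (rule eq_matI)
    fix i j assume "i < dim_row (0\<^sub>m ?n1 1 :: complex mat)" "j < dim_col (0\<^sub>m ?n1 1 :: complex mat)"
    then have i: "i < ?n1" and j: "j = 0" by auto
    have "A0 $$ (i, 0) = A' $$ (Suc i, 0)" using A'idx[of "Suc i" 0] i n by simp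
    also have "\<dots> = 0" using col0[of "Suc i"] i by simp
    finally show "A0 $$ (i,j) = 0\<^sub>m ?n1 1 $$ (i,j)" using i j by simp
  qed (use A0 in auto)
  have A1e: "A1 = mat 1 1 (\<lambda>_. e)"
  proof (rule eq_matI)
    fix i j assume "i < dim_row (mat 1 1 (\<lambda>_. e))" "j < dim_col (mat 1 1 (\<lambda>_. e))"
    then have i: "i = 0" and j: "j = 0" by auto
    have "A1 $$ (0, 0) = A' $$ (0, 0)" using A'idx[of 0 0] n by simp
    also have "\<dots> = e" using col0[of 0] n by simp
    finally show "A1 $$ (i,j) = mat 1 1 (\<lambda>_. e) $$ (i,j)" using i j by simp
  qed (use A1 in auto)
  have sim: "similar_mat A' A"
    by (rule similar_matI[of A' A "mat_adjoint W" W n]) (use A' A W WW WW' in \<open>auto simp: A'_def\<close>)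
  have "char_poly A' = char_poly A1 * char_poly A3"
    unfolding A'b A0z by (rule char_poly_four_block_zeros_col[OF A1 A2 A3])
  also have "char_poly A1 = [: -e,1 :]"
    by (simp add: A1e char_poly_defs det_def sign_def)
  finally have "[:-e,1:] * char_poly A3 = [:-e,1:] * (\<Prod>e\<leftarrow>es. [:-e,1:])"
    using char_poly_similar[OF sim] cp by simp
  then have cp3: "char_poly A3 = (\<Prod>e\<leftarrow>es. [:- e, 1:])"
    by (metis mult_cancel_left pCons_eq_0_iff zero_neq_one)
  from Cons(1)[OF A3 cp3] obtain U3 where U3: "unitary_mat ?n1 U3"
    and ut3: "upper_triangular (mat_adjoint U3 * A3 * U3)" and dg3: "diag_mat (mat_adjoint U3 * A3 * U3) = es"
    by blast
  have U3c: "U3 \<in> carrier_mat ?n1 ?n1" and U3u: "mat_adjoint U3 * U3 = 1\<^sub>m ?n1"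
    using U3 unfolding unitary_mat_def by auto
  define FB where "FB = four_block_mat (1\<^sub>m 1) (0\<^sub>m 1 ?n1) (0\<^sub>m ?n1 1) U3"
  have FB: "FB \<in> carrier_mat n n" unfolding FB_def using U3c n1 four_block_carrier_mat[of "1\<^sub>m 1" 1 1 U3 ?n1 ?n1] by simp
  have FBadj: "mat_adjoint FB = four_block_mat (1\<^sub>m 1) (0\<^sub>m 1 ?n1) (0\<^sub>m ?n1 1) (mat_adjoint U3)"
  proof (rule eq_matI)
    fix i j assume "i < dim_row (four_block_mat (1\<^sub>m 1) (0\<^sub>m 1 ?n1) (0\<^sub>m ?n1 1) (mat_adjoint U3))"
      "j < dim_col (four_block_mat (1\<^sub>m 1) (0\<^sub>m 1 ?n1) (0\<^sub>m ?n1 1) (mat_adjoint U3))"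
    then have i: "i < 1 + ?n1" and j: "j < 1 + ?n1" using U3c by auto
    show "mat_adjoint FB $$ (i, j) = four_block_mat (1\<^sub>m 1) (0\<^sub>m 1 ?n1) (0\<^sub>m ?n1 1) (mat_adjoint U3) $$ (i, j)"
      using i j U3c FB n1 unfolding FB_def by (auto simp: index_mat_four_block)
  qed (use FB U3c n1 in \<open>auto simp: FB_def\<close>)
  define U where "U = W * FB"
  have U: "U \<in> carrier_mat n n" unfolding U_def using W FB by simp
  have Uadj: "mat_adjoint U = mat_adjoint FB * mat_adjoint W" unfolding U_def
    by (rule madj_mult) (use W FB in auto)
  have adjW: "mat_adjoint W \<in> carrier_mat n n" using W by simp
  have adjFB: "mat_adjoint FB \<in> carrier_mat n n" using FB by simp
  have "mat_adjoint U * U = mat_adjoint FB * (mat_adjoint W * W) * FB" 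
    by (simp only: Uadj) (simp add: U_def adjW adjFB W FB assoc_mult_mat[of _ n n _ n _ n])
  also have "\<dots> = mat_adjoint FB * FB" using WW FB adjFB by simp
  also have "\<dots> = 1\<^sub>m n" unfolding FBadj unfolding FB_def
    by (subst mult_four_block_mat[OF one_carrier_mat zero_carrier_mat zero_carrier_mat madj_carrier[OF U3c] 
          one_carrier_mat zero_carrier_mat zero_carrier_mat U3c]) (use U3c U3u n1 in auto)
  finally have uU: "unitary_mat n U" by (rule unitaryI[OF U])
  have "mat_adjoint U * A * U = mat_adjoint FB * A' * FB"
    by (simp only: Uadj) (simp add: U_def A'_def adjW adjFB W FB A assoc_mult_mat[of _ n n _ n _ n])
  also have "\<dots> = four_block_mat A1 (A2 * U3) (0\<^sub>m ?n1 1) (mat_adjoint U3 * A3 * U3)"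
    unfolding FBadj A'b A0z unfolding FB_def
    by (subst mult_four_block_mat[OF one_carrier_mat zero_carrier_mat zero_carrier_mat madj_carrier[OF U3c] 
          A1 A2 zero_carrier_mat A3], 
        subst mult_four_block_mat[of _ 1 1 _ ?n1 _ ?n1], (use A1 A2 A3 U3c in auto)[8],
        use A1 A2 A3 U3c in auto)
  finally have B: "mat_adjoint U * A * U = four_block_mat A1 (A2 * U3) (0\<^sub>m ?n1 1) (mat_adjoint U3 * A3 * U3)" .
  have B3: "mat_adjoint U3 * A3 * U3 \<in> carrier_mat ?n1 ?n1" using U3c A3 by (intro mult_carrier_sq madj_carrier)
  have ut1: "upper_triangular A1" unfolding A1e by (auto simp: upper_triangular_def)
  show ?case
  proof (intro exI[of _ U] conjI uU)
    show "upper_triangular (mat_adjoint U * A * U)" unfolding B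
      by (rule upper_triangular_four_block[OF A1 B3 ut1 ut3])
    show "diag_mat (mat_adjoint U * A * U) = e # es" unfolding B diag_four_block_mat[OF A1 B3] dg3
      by (simp add: A1e diag_mat_def)
  qed
qed


definition diagm :: "nat \<Rightarrow> (nat \<Rightarrow> complex) \<Rightarrow> complex mat" where
  "diagm n f = mat n n (\<lambda>(i,j). if i = j then f i else 0)"

lemma diagm_carrier[simp]: "diagm n f \<in> carrier_mat n n"
  and diagm_dims[simp]: "dim_row (diagm n f) = n" "dim_col (diagm n f) = n"
  by (auto simp: diagm_def)

lemma diagm_index[simp]: "i < n \<Longrightarrow> j < n \<Longrightarrow> diagm n f $$ (i,j) = (if i = j then f i else 0)"
  by (simp add: diagm_def)

lemma diagm_mult_left_index: assumes "M \<in> carrier_mat n m" "i < n" "j < m"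
  shows "(diagm n f * M) $$ (i,j) = f i * M $$ (i,j)"
proof -
  have "(diagm n f * M) $$ (i,j) = (\<Sum>k<n. (if i = k then f i else 0) * M $$ (k,j))"
    using assms by (subst mult_index_sum) auto
  also have "\<dots> = (\<Sum>k<n. if i = k then f i * M $$ (k,j) else 0)" by (intro sum.cong) auto
  also have "\<dots> = f i * M $$ (i,j)" using assms(2) by (subst sum.delta') auto
  finally show ?thesis .
qed

lemma diagm_mult_right_index: assumes "M \<in> carrier_mat m n" "i < m" "j < n"
  shows "(M * diagm n f) $$ (i,j) = M $$ (i,j) * f j"
proof -
  have "(M * diagm n f) $$ (i,j) = (\<Sum>k<n. M $$ (i,k) * (if k = j then f k else 0))"
    using assms by (subst mult_index_sum) auto
  also have "\<dots> = (\<Sum>k<n. if j = k then M $$ (i,k) * f k else 0)" by (intro sum.cong) auto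
  also have "\<dots> = M $$ (i,j) * f j" using assms(3) by (subst sum.delta') auto
  finally show ?thesis .
qed

lemma diagm_mult: "diagm n f * diagm n g = diagm n (\<lambda>i. f i * g i)"
proof (rule eq_matI)
  fix i j assume "i < dim_row (diagm n (\<lambda>i. f i * g i))" "j < dim_col (diagm n (\<lambda>i. f i * g i))"
  then have i: "i < n" and j: "j < n" by auto
  show "(diagm n f * diagm n g) $$ (i,j) = diagm n (\<lambda>i. f i * g i) $$ (i,j)"
    by (simp only: diagm_mult_left_index[OF diagm_carrier i j]) (use i j in simp)
qed auto

lemma diagm_one: "(\<And>i. i < n \<Longrightarrow> f i = 1) \<Longrightarrow> diagm n f = 1\<^sub>m n"
  by (rule eq_matI) auto

lemma diagm_cong: "(\<And>i. i < n \<Longrightarrow> f i = g i) \<Longrightarrow> diagm n f = diagm n g"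
  by (rule eq_matI) auto

lemma diagm_adj: "mat_adjoint (diagm n f) = diagm n (\<lambda>i. cnj (f i))"
  by (rule eq_matI) auto

definition tr :: "complex mat \<Rightarrow> complex" where
  "tr M = (\<Sum>i<dim_row M. M $$ (i,i))"

lemma tr_comm: assumes "A \<in> carrier_mat n m" "B \<in> carrier_mat m n"
  shows "tr (A * B) = tr (B * A)"
proof -
  have "tr (A * B) = (\<Sum>i<n. \<Sum>k<m. A $$ (i,k) * B $$ (k,i))"
    unfolding tr_def using assms by (intro sum.cong) (auto simp: scalar_prod_def atLeast0LessThan)
  also have "\<dots> = (\<Sum>k<m. \<Sum>i<n. B $$ (k,i) * A $$ (i,k))"
    by (subst sum.swap) (simp add: mult.commute)
  also have "\<dots> = tr (B * A)"
    unfolding tr_def using assms by (intro sum.cong) (auto simp: scalar_prod_def atLeast0LessThan)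
  finally show ?thesis .
qed

lemma tr_one[simp]: "tr (1\<^sub>m n) = of_nat n"
  unfolding tr_def by simp

lemma tr_diagm[simp]: "tr (diagm n f) = (\<Sum>i<n. f i)"
  unfolding tr_def by simp

section \<open>Spectral decomposition of a positive definite matrix\<close>

lemma spectral:
  assumes pd: "positive_definite d A" and len: "length ts = d"
    and cp: "char_poly A = (\<Prod>t\<leftarrow>ts. [:- complex_of_real t, 1:])"
  shows "\<exists>U. unitary_mat d U \<and> mat_adjoint U * A * U = diagm d (\<lambda>i. complex_of_real (ts ! i)) \<and> (\<forall>i<d. ts ! i > 0)"
proof -
  have A: "A \<in> carrier_mat d d" and herm: "mat_adjoint A = A"
    and pos: "\<And>v. v \<in> carrier_vec d \<Longrightarrow> v \<noteq> 0\<^sub>v d \<Longrightarrow> Re ((A *\<^sub>v v) \<bullet>c v) > 0"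
    using pd unfolding positive_definite_def by auto
  have cp': "char_poly A = (\<Prod>e\<leftarrow>map complex_of_real ts. [:- e, 1:])" using cp by (simp add: o_def)
  from unitary_schur[OF A cp'] obtain U where uU: "unitary_mat d U"
    and ut: "upper_triangular (mat_adjoint U * A * U)" and dg: "diag_mat (mat_adjoint U * A * U) = map complex_of_real ts"
    by blast
  have U: "U \<in> carrier_mat d d" and UU: "mat_adjoint U * U = 1\<^sub>m d" using uU unfolding unitary_mat_def by auto
  define B where "B = mat_adjoint U * A * U"
  have B: "B \<in> carrier_mat d d" unfolding B_def using U A by simp
  have Bh: "mat_adjoint B = B" unfolding B_def
    using U A herm by (simp add: madj_mult assoc_mult_mat[OF madj_carrier[OF U] A U])
  have Bdiag: "\<And>i. i < d \<Longrightarrow> B $$ (i,i) = complex_of_real (ts ! i)"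
    using dg B len unfolding B_def[symmetric] diag_mat_def
    by (metis (no_types, lifting) carrier_matD(1) diff_zero length_map length_upt nth_map nth_upt plus_nat.add_0)
  have Beq: "B = diagm d (\<lambda>i. complex_of_real (ts ! i))"
  proof (rule eq_matI)
    fix i j assume "i < dim_row (diagm d (\<lambda>i. complex_of_real (ts ! i)))" "j < dim_col (diagm d (\<lambda>i. complex_of_real (ts ! i)))"
    then have i: "i < d" and j: "j < d" by auto
    show "B $$ (i,j) = diagm d (\<lambda>i. complex_of_real (ts ! i)) $$ (i,j)"
    proof (cases "i = j")
      case True then show ?thesis using Bdiag i j by simp
    next
      case False
      show ?thesis
      proof (cases "j < i")
        case True then have "B $$ (i,j) = 0" using ut i B unfolding B_def[symmetric] upper_triangular_def by auto
        then show ?thesis using i j False by simp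
      next
        case False2: False
        then have ji: "i < j" using False by simp
        have "B $$ (j,i) = 0" using ut j ji B unfolding B_def[symmetric] upper_triangular_def by auto
        moreover have "B $$ (i,j) = cnj (B $$ (j,i))" using B i j by (subst Bh[symmetric]) simp
        ultimately show ?thesis using i j False by simp
      qed
    qed
  qed (use B in auto)
  have tpos: "ts ! i > 0" if i: "i < d" for i
  proof -
    have c: "col U i \<in> carrier_vec d" using U col_dim[of U i] by simp
    have "col U i \<bullet>c col U i = 1" using adj_mult_index[OF U U i i] UU i by simp
    then have nz: "col U i \<noteq> 0\<^sub>v d" by auto
    have "B $$ (i,i) = (mat_adjoint U * (A * U)) $$ (i,i)" unfolding B_def
      using assoc_mult_mat[OF madj_carrier[OF U] A U] by simp
    also have "\<dots> = col (A * U) i \<bullet>c col U i" using adj_mult_index[OF U _ i i] A U by simp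
    also have "\<dots> = (A *\<^sub>v col U i) \<bullet>c col U i" using col_mult2[OF A U i] by simp
    finally have "Re (B $$ (i,i)) > 0" using pos[OF c nz] by simp
    then show ?thesis using Bdiag[OF i] by simp
  qed
  show ?thesis using uU Beq tpos unfolding B_def by blast
qed


lemma cancel_left: fixes A B X :: "complex mat" assumes "A \<in> carrier_mat n n" "B \<in> carrier_mat n n" "X \<in> carrier_mat n m" "A * B = 1\<^sub>m n"
  shows "A * (B * X) = X"
  using assms left_mult_one_mat[OF assms(3)] by (simp flip: assoc_mult_mat[OF assms(1,2,3)])

lemma assoc_sq: "A \<in> carrier_mat n n \<Longrightarrow> B \<in> carrier_mat n n \<Longrightarrow> C \<in> carrier_mat n n \<Longrightarrow> A * B * C = A * (B * C)"
  by (rule assoc_mult_mat)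

lemma inverse_setup:
  assumes uU: "unitary_mat d U" and A: "A \<in> carrier_mat d d"
    and AU: "mat_adjoint U * A * U = diagm d (\<lambda>i. complex_of_real (ts ! i))"
    and pos: "\<forall>i<d. ts ! i > 0"
  defines "Ainv \<equiv> U * diagm d (\<lambda>i. 1 / complex_of_real (ts ! i)) * mat_adjoint U"
  shows "Ainv \<in> carrier_mat d d" "A * Ainv = 1\<^sub>m d" "Ainv * A = 1\<^sub>m d"
    "tr Ainv = (\<Sum>i<d. 1 / complex_of_real (ts ! i))"
proof -
  have U: "U \<in> carrier_mat d d" and UU: "mat_adjoint U * U = 1\<^sub>m d" and UU': "U * mat_adjoint U = 1\<^sub>m d"
    using uU unfolding unitary_mat_def by auto
  have aU: "mat_adjoint U \<in> carrier_mat d d" using U by simp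
  define D where "D = diagm d (\<lambda>i. complex_of_real (ts ! i))"
  define Di where "Di = diagm d (\<lambda>i. 1 / complex_of_real (ts ! i))"
  have DDi: "D * Di = 1\<^sub>m d" unfolding D_def Di_def diagm_mult using pos by (intro diagm_one) auto
  have DiD: "Di * D = 1\<^sub>m d" unfolding D_def Di_def diagm_mult using pos by (intro diagm_one) auto
  have D: "D \<in> carrier_mat d d" and Di: "Di \<in> carrier_mat d d" unfolding D_def Di_def by auto
  have "U * (mat_adjoint U * A * U) * mat_adjoint U = (U * mat_adjoint U) * A * (U * mat_adjoint U)"
    using U aU A by (simp add: assoc_sq[of _ d])
  then have Aeq: "A = U * D * mat_adjoint U" using AU UU' A unfolding D_def by simp
  show Ainv: "Ainv \<in> carrier_mat d d" unfolding Ainv_def using U aU by simp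
  show "A * Ainv = 1\<^sub>m d" unfolding Aeq Ainv_def Di_def[symmetric]
    using U aU D Di UU DDi UU' by (simp add: assoc_sq[of _ d] cancel_left[of _ d _ _ d])
  show "Ainv * A = 1\<^sub>m d" unfolding Aeq Ainv_def Di_def[symmetric]
    using U aU D Di UU DiD UU' by (simp add: assoc_sq[of _ d] cancel_left[of _ d _ _ d])
  have "tr Ainv = tr (U * (Di * mat_adjoint U))" unfolding Ainv_def Di_def[symmetric] using U aU Di by (simp add: assoc_sq[of _ d])
  also have "\<dots> = tr ((Di * mat_adjoint U) * U)" by (rule tr_comm[OF U]) (use aU Di in simp)
  also have "\<dots> = tr Di" using U aU Di UU by (simp add: assoc_sq[of _ d])
  finally show "tr Ainv = (\<Sum>i<d. 1 / complex_of_real (ts ! i))" unfolding Di_def by simp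
qed


lemma sum_ts_complex: assumes "length ts = d"
  shows "complex_of_real (\<Sum>t\<leftarrow>ts. 1 / t) = (\<Sum>i<d. 1 / complex_of_real (ts ! i))"
proof -
  have "(\<Sum>t\<leftarrow>ts. 1 / t) = (\<Sum>i<d. 1 / ts ! i)"
    using assms by (simp add: sum_list_sum_nth atLeast0LessThan)
  then show ?thesis by simp
qed

lemma tr_gram: fixes S :: "complex mat" assumes S: "S \<in> carrier_mat d d"
    and cols: "\<forall>j<d. cvec_norm (col S j) = 1"
  shows "tr (S * mat_adjoint S) = of_nat d"
proof -
  have "tr (S * mat_adjoint S) = tr (mat_adjoint S * S)" by (rule tr_comm[OF S]) (use S in simp)
  also have "\<dots> = (\<Sum>j<d. col S j \<bullet>c col S j)"
    unfolding tr_def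
  proof (intro sum.cong)
    show "{..<dim_row (mat_adjoint S * S)} = {..<d}" using S by simp
    fix j assume "j \<in> {..<d}"
    then show "(mat_adjoint S * S) $$ (j,j) = col S j \<bullet>c col S j" by (intro adj_mult_index[OF S S]) auto
  qed
  also have "\<dots> = (\<Sum>j<d. 1)" 
  proof (intro sum.cong refl)
    fix j assume "j \<in> {..<d}"
    then show "col S j \<bullet>c col S j = 1" using cols cvec_norm_sq[of "col S j"] by simp
  qed
  finally show ?thesis by simp
qed

lemma iii_to_ii:
  assumes uU: "unitary_mat d U" and A: "A \<in> carrier_mat d d"
    and AU: "mat_adjoint U * A * U = diagm d (\<lambda>i. complex_of_real (ts ! i))"
    and pos: "\<forall>i<d. ts ! i > 0" and len: "length ts = d"
    and S: "S \<in> carrier_mat d d" and AS: "A * (S * mat_adjoint S) = 1\<^sub>m d"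
    and cols: "\<forall>j<d. cvec_norm (col S j) = 1"
  shows "(\<Sum>t\<leftarrow>ts. 1 / t) = real d"
proof -
  define Ainv where "Ainv = U * diagm d (\<lambda>i. 1 / complex_of_real (ts ! i)) * mat_adjoint U"
  note inv = inverse_setup[OF uU A AU pos, folded Ainv_def]
  have SS: "S * mat_adjoint S \<in> carrier_mat d d" using S by simp
  have "Ainv = Ainv * (A * (S * mat_adjoint S))" unfolding AS using inv(1) by simp
  also have "\<dots> = (Ainv * A) * (S * mat_adjoint S)" using inv(1) A SS by (simp add: assoc_sq[of _ d])
  also have "\<dots> = S * mat_adjoint S" using inv(3) left_mult_one_mat[OF SS] by simp
  finally have "tr Ainv = of_nat d" using tr_gram[OF S cols] by simp
  then have "complex_of_real (\<Sum>t\<leftarrow>ts. 1 / t) = complex_of_real (real d)"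
    using inv(4) sum_ts_complex[OF len] by simp
  then show ?thesis by (simp only: of_real_eq_iff)
qed


section \<open>Roots of unity and the Fourier matrix\<close>

lemma cis_ne_1: fixes m :: int and n :: nat assumes n: "n > 0" and m: "m \<noteq> 0" and mn: "\<bar>m\<bar> < int n"
  shows "cis (2 * pi * of_int m / real n) \<noteq> 1"
proof
  assume "cis (2 * pi * of_int m / real n) = 1"
  then obtain k :: int where k: "2 * pi * of_int m / real n = of_int k * 2 * pi"
    by (auto simp: complex_eq_iff cos_one_2pi_int)
  then have "real_of_int m = real n * of_int k" using n by (simp add: field_simps)
  then have mk: "m = int n * k" by (metis of_int_eq_iff of_int_mult of_int_of_nat_eq)
  show False
  proof (cases "k = 0")
    case True then show False using mk m by simp
  next
    case False
    then have "\<bar>k\<bar> \<ge> 1" by linarith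
    then have "int n * \<bar>k\<bar> \<ge> int n" by (simp add: mult_le_cancel_left1)
    then show False using mk mn by (simp add: abs_mult)
  qed
qed

lemma cis_pow_n: fixes m :: int and n :: nat assumes n: "n > 0"
  shows "cis (2 * pi * of_int m / real n) ^ n = 1"
proof -
  have "cis (2 * pi * of_int m / real n) ^ n = cis (2 * pi * of_int m)"
    using n by (simp add: DeMoivre)
  also have "\<dots> = 1" by (rule cis_multiple_2pi) simp
  finally show ?thesis .
qed

lemma roots_sum: fixes m :: int and n :: nat assumes n: "n > 0" and m: "m \<noteq> 0" and mn: "\<bar>m\<bar> < int n"
  shows "(\<Sum>k<n. cis (2 * pi * of_int m / real n) ^ k) = 0"
  using cis_ne_1[OF n m mn] cis_pow_n[OF n, of m] by (simp add: geometric_sum)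

lemma fourier_sum: assumes d: "d > 0" and j: "j < d" and l: "l < d"
  shows "(\<Sum>k<d. cis (2*pi*real j*real k/real d) * cnj (cis (2*pi*real l*real k/real d)))
     = (if j = l then of_nat d else 0)"
proof -
  define m where "m = int j - int l"
  have "(\<Sum>k<d. cis (2*pi*real j*real k/real d) * cnj (cis (2*pi*real l*real k/real d)))
     = (\<Sum>k<d. cis (2 * pi * of_int m / real d) ^ k)"
  proof (intro sum.cong refl)
    fix k assume "k \<in> {..<d}"
    have "cis (2*pi*real j*real k/real d) * cnj (cis (2*pi*real l*real k/real d))
       = cis (2*pi*real j*real k/real d + - (2*pi*real l*real k/real d))"
      by (simp only: cis_cnj cis_mult)
    also have "2*pi*real j*real k/real d + - (2*pi*real l*real k/real d) = real k * (2 * pi * of_int m / real d)"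
      using d unfolding m_def by (simp add: field_simps)
    finally show "cis (2*pi*real j*real k/real d) * cnj (cis (2*pi*real l*real k/real d)) = cis (2 * pi * of_int m / real d) ^ k"
      by (simp add: DeMoivre)
  qed
  also have "\<dots> = (if j = l then of_nat d else 0)"
  proof (cases "j = l")
    case True then show ?thesis unfolding m_def by simp
  next
    case False
    then have "m \<noteq> 0" "\<bar>m\<bar> < int d" unfolding m_def using j l by auto
    then show ?thesis using roots_sum[OF d] False by simp
  qed
  finally show ?thesis .
qed

definition fourier :: "nat \<Rightarrow> complex mat" where
  "fourier d = mat d d (\<lambda>(k,j). cis (2*pi*real k*real j/real d) / complex_of_real (sqrt (real d)))"

lemma fourier_carrier[simp]: "fourier d \<in> carrier_mat d d"
  by (simp add: fourier_def)

lemma fourier_dims[simp]: "dim_row (fourier d) = d" "dim_col (fourier d) = d"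
  by (simp_all add: fourier_def)

lemma fourier_index: "k < d \<Longrightarrow> j < d \<Longrightarrow> fourier d $$ (k,j) = cis (2*pi*real k*real j/real d) / complex_of_real (sqrt (real d))"
  by (simp add: fourier_def)

lemma fourier_unitary: assumes d: "d > 0" shows "fourier d * mat_adjoint (fourier d) = 1\<^sub>m d"
proof (rule eq_matI)
  fix j l assume "j < dim_row (1\<^sub>m d :: complex mat)" "l < dim_col (1\<^sub>m d :: complex mat)"
  then have j: "j < d" and l: "l < d" by auto
  have sd: "complex_of_real (sqrt (real d)) * complex_of_real (sqrt (real d)) = of_nat d"
    by (simp flip: of_real_mult)
  have "(fourier d * mat_adjoint (fourier d)) $$ (j,l) = (\<Sum>k<d. fourier d $$ (j,k) * cnj (fourier d $$ (l,k)))"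
    using j l by (subst mult_index_sum) auto
  also have "\<dots> = (\<Sum>k<d. cis (2*pi*real j*real k/real d) * cnj (cis (2*pi*real l*real k/real d))) / of_nat d"
    unfolding sum_divide_distrib using j l sd by (intro sum.cong refl) (simp add: fourier_index)
  also have "\<dots> = 1\<^sub>m d $$ (j,l)" unfolding fourier_sum[OF d j l] using j l d by simp
  finally show "(fourier d * mat_adjoint (fourier d)) $$ (j,l) = 1\<^sub>m d $$ (j,l)" .
qed auto

lemma fourier_abs: assumes d: "d > 0" "k < d" "j < d"
  shows "cnj (fourier d $$ (k,j)) * fourier d $$ (k,j) = 1 / of_nat d"
proof -
  have sd: "complex_of_real (sqrt (real d)) * complex_of_real (sqrt (real d)) = of_nat d"
    by (simp flip: of_real_mult)
  have "cnj (cis (2*pi*real k*real j/real d)) * cis (2*pi*real k*real j/real d) = 1"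
    by (simp add: cis_cnj cis_mult)
  then show ?thesis using assms sd by (simp add: fourier_index)
qed


lemma ii_to_iii:
  assumes uU: "unitary_mat d U" and A: "A \<in> carrier_mat d d"
    and AU: "mat_adjoint U * A * U = diagm d (\<lambda>i. complex_of_real (ts ! i))"
    and pos: "\<forall>i<d. ts ! i > 0" and len: "length ts = d" and d: "d > 0"
    and sum: "(\<Sum>t\<leftarrow>ts. 1 / t) = real d"
  shows "\<exists>S. S \<in> carrier_mat d d \<and> invertible_mat S \<and>
                 (\<forall>j<d. cvec_norm (col S j) = 1) \<and>
                 A * (S * mat_adjoint S) = 1\<^sub>m d"
proof -
  define Di where "Di = diagm d (\<lambda>i. 1 / complex_of_real (ts ! i))"
  define Ainv where "Ainv = U * Di * mat_adjoint U"
  note inv = inverse_setup[OF uU A AU pos, folded Di_def, folded Ainv_def]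
  have U: "U \<in> carrier_mat d d" and UU: "mat_adjoint U * U = 1\<^sub>m d" and UU': "U * mat_adjoint U = 1\<^sub>m d"
    using uU unfolding unitary_mat_def by auto
  have aU: "mat_adjoint U \<in> carrier_mat d d" using U by simp
  define Dh where "Dh = diagm d (\<lambda>i. complex_of_real (1 / sqrt (ts ! i)))"
  define F where "F = fourier d"
  have F: "F \<in> carrier_mat d d" and aF: "mat_adjoint F \<in> carrier_mat d d" unfolding F_def by auto
  have FF: "F * mat_adjoint F = 1\<^sub>m d" unfolding F_def by (rule fourier_unitary[OF d])
  have Dh: "Dh \<in> carrier_mat d d" and aDh: "mat_adjoint Dh \<in> carrier_mat d d" and Di: "Di \<in> carrier_mat d d"
    unfolding Dh_def Di_def by auto
  have sq: "\<And>i. i < d \<Longrightarrow> complex_of_real (1 / sqrt (ts ! i)) * cnj (complex_of_real (1 / sqrt (ts ! i))) = 1 / complex_of_real (ts ! i)"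
  proof -
    fix i assume i: "i < d"
    have t: "ts ! i > 0" using pos i by simp
    have "(1 / sqrt (ts ! i)) * (1 / sqrt (ts ! i)) = 1 / (sqrt (ts ! i) * sqrt (ts ! i))" by simp
    also have "\<dots> = 1 / ts ! i" using t by simp
    finally have "(1 / sqrt (ts ! i)) * (1 / sqrt (ts ! i)) = 1 / ts ! i" .
    then have "complex_of_real (1 / sqrt (ts ! i)) * complex_of_real (1 / sqrt (ts ! i)) = complex_of_real (1 / ts ! i)"
      by (simp only: of_real_mult[symmetric])
    then show "complex_of_real (1 / sqrt (ts ! i)) * cnj (complex_of_real (1 / sqrt (ts ! i))) = 1 / complex_of_real (ts ! i)"
      by simp
  qed
  have DhDh: "Dh * mat_adjoint Dh = Di" unfolding Dh_def Di_def diagm_adj diagm_mult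
    by (rule diagm_cong) (rule sq)
  have DhDh': "mat_adjoint Dh * Dh = Di" unfolding Dh_def Di_def diagm_adj diagm_mult
    by (rule diagm_cong) (subst mult.commute, rule sq)
  define S where "S = U * Dh * F"
  have S: "S \<in> carrier_mat d d" unfolding S_def using U Dh F by simp
  have aS: "mat_adjoint S = mat_adjoint F * mat_adjoint Dh * mat_adjoint U"
    unfolding S_def using U Dh F by (simp add: madj_mult)
  have SS: "S * mat_adjoint S = Ainv"
  proof -
    have "S * mat_adjoint S = U * (Dh * (F * mat_adjoint F) * mat_adjoint Dh) * mat_adjoint U"
      unfolding aS unfolding S_def using U aU Dh aDh F aF by (simp add: assoc_sq[of _ d])
    also have "\<dots> = Ainv" unfolding FF Ainv_def using Dh DhDh by simp
    finally show ?thesis .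
  qed
  have ASS: "A * (S * mat_adjoint S) = 1\<^sub>m d" unfolding SS by (rule inv(2))
  have "S * (mat_adjoint S * A) = 1\<^sub>m d"
    using S A inv(3) unfolding SS[symmetric] by (simp add: assoc_sq[of _ d])
  moreover have "mat_adjoint S * A \<in> carrier_mat d d" using S A by simp
  ultimately have "(mat_adjoint S * A) * S = 1\<^sub>m d" using mat_mult_left_right_inverse[OF S] by blast
  then have invS: "invertible_mat S" unfolding invertible_mat_def inverts_mat_def square_mat.simps
    using S \<open>S * (mat_adjoint S * A) = 1\<^sub>m d\<close> by (intro conjI exI[of _ "mat_adjoint S * A"]) auto
  have SaS: "mat_adjoint S * S = mat_adjoint F * Di * F"
  proof -
    have "mat_adjoint S * S = mat_adjoint F * (mat_adjoint Dh * (mat_adjoint U * U) * Dh) * F"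
      unfolding aS unfolding S_def using U aU Dh aDh F aF by (simp add: assoc_sq[of _ d])
    also have "\<dots> = mat_adjoint F * Di * F" unfolding UU using DhDh' right_mult_one_mat[OF aDh] by simp
    finally show ?thesis .
  qed
  have sumd: "(\<Sum>k<d. 1 / complex_of_real (ts ! k)) = of_nat d"
    using sum_ts_complex[OF len] sum by simp
  have cols: "\<forall>j<d. cvec_norm (col S j) = 1"
  proof (intro allI impI)
    fix j assume j: "j < d"
    have "col S j \<bullet>c col S j = (mat_adjoint S * S) $$ (j,j)" using adj_mult_index[OF S S j j] by simp
    also have "\<dots> = (mat_adjoint F * (Di * F)) $$ (j,j)" unfolding SaS using aF Di F by (simp add: assoc_sq[of _ d])
    also have "\<dots> = (\<Sum>k<d. cnj (F $$ (k,j)) * ((1 / complex_of_real (ts ! k)) * F $$ (k,j)))"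
    proof -
      have DF: "\<And>k. k < d \<Longrightarrow> (Di * F) $$ (k,j) = (1 / complex_of_real (ts ! k)) * F $$ (k,j)"
        unfolding Di_def by (rule diagm_mult_left_index[OF F _ j])
      show ?thesis using j F Di by (subst mult_index_sum) (auto simp del: index_mult_mat(1) simp: DF)
    qed
    also have "\<dots> = (\<Sum>k<d. (1 / complex_of_real (ts ! k)) * (1 / of_nat d))"
      using fourier_abs[OF d _ j] j unfolding F_def by (intro sum.cong refl) (simp add: algebra_simps)
    also have "\<dots> = 1" unfolding sum_distrib_right[symmetric] sumd using d by simp
    finally have "col S j \<bullet>c col S j = 1" .
    then show "cvec_norm (col S j) = 1" unfolding cvec_norm_def by simp
  qed
  show ?thesis using S invS cols ASS by blast
qed


lemma sum_sq_le_sq_sum: fixes f :: "'a \<Rightarrow> real"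
  assumes "finite A" "\<And>a. a \<in> A \<Longrightarrow> f a \<ge> 0"
  shows "(\<Sum>a\<in>A. (f a)^2) \<le> (\<Sum>a\<in>A. f a)^2"
  using assms
proof (induct A rule: finite_induct)
  case (insert x F)
  have s: "sum f F \<ge> 0" using insert by (intro sum_nonneg) auto
  have fx: "f x \<ge> 0" using insert by auto
  have "(\<Sum>a\<in>insert x F. (f a)^2) = (f x)^2 + (\<Sum>a\<in>F. (f a)^2)" using insert by simp
  also have "\<dots> \<le> (f x)^2 + (sum f F)^2" using insert by simp
  also have "\<dots> \<le> (f x + sum f F)^2" using s fx by (simp add: power2_sum)
  finally show ?case using insert by simp
qed simp

lemma norm_le_l1: "cvec_norm w \<le> (\<Sum>i<dim_vec w. cmod (w$i))"
proof -
  have "cvec_norm w \<le> sqrt ((\<Sum>i<dim_vec w. cmod (w$i))^2)"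
    unfolding cvec_norm_sum by (rule real_sqrt_le_mono, rule sum_sq_le_sq_sum) auto
  also have "\<dots> = (\<Sum>i<dim_vec w. cmod (w$i))" by (simp add: sum_nonneg)
  finally show ?thesis .
qed

lemma comp_le_norm: assumes "i < dim_vec v" shows "cmod (v$i) \<le> cvec_norm v"
proof -
  have "(cmod (v$i))^2 \<le> (\<Sum>k<dim_vec v. (cmod (v$k))^2)"
    using assms by (intro member_le_sum) auto
  then have "sqrt ((cmod (v$i))^2) \<le> cvec_norm v" unfolding cvec_norm_sum by (rule real_sqrt_le_mono)
  then show ?thesis by simp
qed

lemma mat_bound: assumes M: "M \<in> carrier_mat n m"
  shows "\<exists>C\<ge>0. \<forall>v\<in>carrier_vec m. cvec_norm (M *\<^sub>v v) \<le> C * cvec_norm v"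
proof (intro exI[of _ "\<Sum>i<n. \<Sum>j<m. cmod (M $$ (i,j))"] conjI ballI)
  show "0 \<le> (\<Sum>i<n. \<Sum>j<m. cmod (M $$ (i,j)))" by (intro sum_nonneg) auto
  fix v :: "complex vec" assume v: "v \<in> carrier_vec m"
  have "cvec_norm (M *\<^sub>v v) \<le> (\<Sum>i<n. cmod ((M *\<^sub>v v) $ i))"
    using norm_le_l1[of "M *\<^sub>v v"] M by simp
  also have "\<dots> \<le> (\<Sum>i<n. (\<Sum>j<m. cmod (M $$ (i,j))) * cvec_norm v)"
  proof (intro sum_mono)
    fix i assume i: "i \<in> {..<n}"
    have "(M *\<^sub>v v) $ i = (\<Sum>j<m. M $$ (i,j) * v $ j)"
      using i M v by (simp add: scalar_prod_def atLeast0LessThan)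
    then have "cmod ((M *\<^sub>v v) $ i) \<le> (\<Sum>j<m. cmod (M $$ (i,j)) * cmod (v $ j))"
      by (metis (no_types, lifting) norm_mult norm_sum sum.cong)
    also have "\<dots> \<le> (\<Sum>j<m. cmod (M $$ (i,j)) * cvec_norm v)"
      using v by (intro sum_mono mult_left_mono comp_le_norm) auto
    finally show "cmod ((M *\<^sub>v v) $ i) \<le> (\<Sum>j<m. cmod (M $$ (i,j))) * cvec_norm v"
      by (simp add: sum_distrib_right)
  qed
  also have "\<dots> = (\<Sum>i<n. \<Sum>j<m. cmod (M $$ (i,j))) * cvec_norm v" by (simp add: sum_distrib_right)
  finally show "cvec_norm (M *\<^sub>v v) \<le> (\<Sum>i<n. \<Sum>j<m. cmod (M $$ (i,j))) * cvec_norm v" .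
qed

lemma diagm_mult_vec_index: "v \<in> carrier_vec n \<Longrightarrow> i < n \<Longrightarrow> (diagm n f *\<^sub>v v) $ i = f i * v $ i"
proof -
  assume v: "v \<in> carrier_vec n" and i: "i < n"
  have "(diagm n f *\<^sub>v v) $ i = (\<Sum>k<n. (if i = k then f i else 0) * v $ k)"
    using v i by (simp add: scalar_prod_def atLeast0LessThan)
  also have "\<dots> = (\<Sum>k<n. if i = k then f i * v $ k else 0)" by (intro sum.cong) auto
  also have "\<dots> = f i * v $ i" using i by (subst sum.delta') auto
  finally show ?thesis .
qed

lemma diagm_norm: assumes v: "v \<in> carrier_vec n" and u: "\<forall>a<n. cmod (f a) = 1"
  shows "cvec_norm (diagm n f *\<^sub>v v) = cvec_norm v"
proof -
  have "(\<Sum>i<n. (cmod ((diagm n f *\<^sub>v v) $ i))^2) = (\<Sum>i<n. (cmod (v $ i))^2)"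
    by (intro sum.cong refl) (use v u in \<open>simp del: index_mult_mat_vec add: diagm_mult_vec_index norm_mult\<close>)
  then show ?thesis unfolding cvec_norm_sum using v by simp
qed

lemma mult_mat_vec_zero: "M \<in> carrier_mat n m \<Longrightarrow> M *\<^sub>v 0\<^sub>v m = (0\<^sub>v n :: complex vec)"
  by (rule eq_vecI) (auto simp: scalar_prod_def)


section \<open>The operator T = S U S^-1\<close>

lemma mv_carrier_sq[simp]: "A \<in> carrier_mat n n \<Longrightarrow> v \<in> carrier_vec n \<Longrightarrow> A *\<^sub>v v \<in> carrier_vec n"
  by (rule mult_mat_vec_carrier)

lemma mv_assoc: "A \<in> carrier_mat n n \<Longrightarrow> B \<in> carrier_mat n n \<Longrightarrow> v \<in> carrier_vec n \<Longrightarrow> (A * B) *\<^sub>v v = A *\<^sub>v (B *\<^sub>v v)"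
  by (rule assoc_mult_mat_vec)

lemma T_pow: assumes S: "S \<in> carrier_mat d d" and R: "R \<in> carrier_mat d d"
    and SR: "S * R = 1\<^sub>m d" and RS: "R * S = 1\<^sub>m d"
  shows "(S * diagm d u * R) ^\<^sub>m n = S * diagm d (\<lambda>a. u a ^ n) * R"
proof (induct n)
  case 0
  have "diagm d (\<lambda>a. u a ^ 0) = 1\<^sub>m d" by (rule diagm_one) simp
  then show ?case using S R SR by simp
next
  case (Suc n)
  let ?Dn = "diagm d (\<lambda>a. u a ^ n)" and ?D = "diagm d u"
  have "(S * ?D * R) ^\<^sub>m Suc n = S * ?Dn * R * (S * ?D * R)" using Suc by simp
  also have "\<dots> = S * (?Dn * ((R * S) * (?D * R)))" using S R by (simp add: assoc_sq[of _ d])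
  also have "\<dots> = S * (?Dn * ?D) * R" using S R RS by (simp add: assoc_sq[of _ d])
  also have "?Dn * ?D = diagm d (\<lambda>a. u a ^ Suc n)" unfolding diagm_mult by (simp add: mult.commute)
  finally show ?case .
qed

lemma T_props: assumes S: "S \<in> carrier_mat d d" and R: "R \<in> carrier_mat d d"
    and SR: "S * R = 1\<^sub>m d" and RS: "R * S = 1\<^sub>m d" and u: "\<forall>a<d. cmod (u a) = 1"
  shows "power_bounded d (S * diagm d u * R)" "class_C1dot d (S * diagm d u * R)"
proof -
  define T where "T = S * diagm d u * R"
  have T: "T \<in> carrier_mat d d" unfolding T_def using S R by simp
  obtain CS where CS: "CS \<ge> 0" "\<forall>v\<in>carrier_vec d. cvec_norm (S *\<^sub>v v) \<le> CS * cvec_norm v"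
    using mat_bound[OF S] by blast
  obtain CR where CR: "CR \<ge> 0" "\<forall>v\<in>carrier_vec d. cvec_norm (R *\<^sub>v v) \<le> CR * cvec_norm v"
    using mat_bound[OF R] by blast
  have un: "\<forall>a<d. cmod (u a ^ n) = 1" for n using u by (simp add: norm_power)
  have Tn: "T ^\<^sub>m n *\<^sub>v v = S *\<^sub>v (diagm d (\<lambda>a. u a ^ n) *\<^sub>v (R *\<^sub>v v))" if v: "v \<in> carrier_vec d" for n v
    unfolding T_def T_pow[OF S R SR RS] using S R v by (simp add: mv_assoc[of _ d])
  have RTn: "R *\<^sub>v (T ^\<^sub>m n *\<^sub>v v) = diagm d (\<lambda>a. u a ^ n) *\<^sub>v (R *\<^sub>v v)" if v: "v \<in> carrier_vec d" for n v
  proof -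
    have "R *\<^sub>v (T ^\<^sub>m n *\<^sub>v v) = (R * S) *\<^sub>v (diagm d (\<lambda>a. u a ^ n) *\<^sub>v (R *\<^sub>v v))"
      unfolding Tn[OF v] using S R v by (simp add: mv_assoc[of _ d])
    then show ?thesis unfolding RS using R v by simp
  qed
  have "\<forall>n. \<forall>v \<in> carrier_vec d. cvec_norm ((T ^\<^sub>m n) *\<^sub>v v) \<le> (CS * CR) * cvec_norm v"
  proof (intro allI ballI)
    fix n and v :: "complex vec" assume v: "v \<in> carrier_vec d"
    have "cvec_norm ((T ^\<^sub>m n) *\<^sub>v v) \<le> CS * cvec_norm (diagm d (\<lambda>a. u a ^ n) *\<^sub>v (R *\<^sub>v v))"
      unfolding Tn[OF v] using CS(2) R v by simp
    also have "\<dots> = CS * cvec_norm (R *\<^sub>v v)" using diagm_norm[OF _ un] R v by simp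
    also have "\<dots> \<le> CS * (CR * cvec_norm v)" using CR(2) v CS(1) by (simp add: mult_left_mono)
    finally show "cvec_norm ((T ^\<^sub>m n) *\<^sub>v v) \<le> (CS * CR) * cvec_norm v" by (simp add: mult.assoc)
  qed
  then show "power_bounded d (S * diagm d u * R)" unfolding power_bounded_def T_def[symmetric] using T by blast
  have "H0 d T = {0\<^sub>v d}"
  proof
    show "{0\<^sub>v d} \<subseteq> H0 d T" unfolding H0_def using T
      by (auto simp: mult_mat_vec_zero[OF pow_carrier_mat[OF T]] cvec_norm_sum)
    show "H0 d T \<subseteq> {0\<^sub>v d}"
    proof
      fix x assume "x \<in> H0 d T"
      then have x: "x \<in> carrier_vec d" and lim: "(\<lambda>n. cvec_norm ((T ^\<^sub>m n) *\<^sub>v x)) \<longlonglongrightarrow> 0"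
        unfolding H0_def by auto
      have le: "cvec_norm (R *\<^sub>v x) \<le> CR * cvec_norm ((T ^\<^sub>m n) *\<^sub>v x)" for n
      proof -
        have "cvec_norm (R *\<^sub>v x) = cvec_norm (diagm d (\<lambda>a. u a ^ n) *\<^sub>v (R *\<^sub>v x))"
          using diagm_norm[OF _ un] R x by simp
        also have "\<dots> = cvec_norm (R *\<^sub>v (T ^\<^sub>m n *\<^sub>v x))" using RTn[OF x] by simp
        also have "\<dots> \<le> CR * cvec_norm ((T ^\<^sub>m n) *\<^sub>v x)" using CR(2) T x by simp
        finally show ?thesis .
      qed
      have "(\<lambda>n. CR * cvec_norm ((T ^\<^sub>m n) *\<^sub>v x)) \<longlonglongrightarrow> CR * 0" by (intro tendsto_mult lim tendsto_const)
      then have "cvec_norm (R *\<^sub>v x) \<le> 0" using le by (intro LIMSEQ_le_const[of _ _ "cvec_norm (R *\<^sub>v x)"]) auto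
      then have "cvec_norm (R *\<^sub>v x) = 0" using cvec_norm_nonneg[of "R *\<^sub>v x"] by simp
      then have Rx: "R *\<^sub>v x = 0\<^sub>v d" using cvec_norm_zero_iff[of "R *\<^sub>v x" d] R x by simp
      have "x = (S * R) *\<^sub>v x" unfolding SR using x by simp
      also have "\<dots> = S *\<^sub>v (R *\<^sub>v x)" using S R x by (simp add: mv_assoc[of _ d])
      also have "\<dots> = 0\<^sub>v d" unfolding Rx by (rule mult_mat_vec_zero[OF S])
      finally show "x \<in> {0\<^sub>v d}" by simp
    qed
  qed
  then show "class_C1dot d (S * diagm d u * R)" unfolding class_C1dot_def T_def .
qed


section \<open>Cesaro means of geometric sequences\<close>

lemma geom_sum1: fixes z :: complex shows "(\<Sum>j=1..n. z^j) = z * (\<Sum>j<n. z^j)"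
proof -
  have "(\<Sum>j=1..n. z^j) = (\<Sum>j<n. z^(Suc j))" using sum.atLeast1_atMost_eq[of "\<lambda>j. z^j" n] by simp
  then show ?thesis by (simp add: sum_distrib_left)
qed

lemma cesaro_geom: fixes z :: complex assumes z: "cmod z = 1"
  shows "(\<lambda>n. (1 / of_nat n) * (\<Sum>j=1..n. z^j)) \<longlonglongrightarrow> (if z = 1 then 1 else 0)"
proof (cases "z = 1")
  case True
  have ev: "\<forall>\<^sub>F n in sequentially. 1 = (1 / of_nat n) * (\<Sum>j=1..n. z^j)"
    using True by (auto simp: eventually_sequentially intro!: exI[of _ 1])
  show ?thesis using True by (simp only: if_True) (rule tendsto_eventually[OF ev[THEN eventually_mono]], simp)
next
  case False
  define K where "K = 2 / cmod (z - 1)"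
  have bnd: "cmod (\<Sum>j=1..n. z^j) \<le> K" for n
  proof -
    have "(\<Sum>j=1..n. z^j) = z * ((z^n - 1) / (z - 1))" unfolding geom_sum1 using False by (simp add: geometric_sum)
    then have "cmod (\<Sum>j=1..n. z^j) = cmod (z^n - 1) / cmod (z - 1)" using z by (simp add: norm_mult norm_divide)
    also have "cmod (z^n - 1) \<le> 2"
      using norm_triangle_ineq4[of "z^n" 1] z by (simp add: norm_power)
    then have "cmod (z^n - 1) / cmod (z - 1) \<le> 2 / cmod (z - 1)" by (simp add: divide_right_mono)
    finally show ?thesis unfolding K_def .
  qed
  have lim: "(\<lambda>n. 1 / real n) \<longlonglongrightarrow> 0" by (rule lim_inverse_n')
  have "(\<lambda>n. (1 / of_nat n) * (\<Sum>j=1..n. z^j)) \<longlonglongrightarrow> (0::complex)"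
  proof (rule tendsto_0_le[OF lim, of _ K])
    show "\<forall>\<^sub>F n in sequentially. norm ((1 / of_nat n) * (\<Sum>j=1..n. z^j)) \<le> norm (1 / real n) * K"
    proof (intro always_eventually allI)
      fix n :: nat
      have "norm ((1 / of_nat n) * (\<Sum>j=1..n. z^j)) = (1 / real n) * cmod (\<Sum>j=1..n. z^j)"
        by (simp add: norm_mult norm_divide)
      also have "\<dots> \<le> (1 / real n) * K" using bnd[of n] by (intro mult_left_mono) auto
      finally show "norm ((1 / of_nat n) * (\<Sum>j=1..n. z^j)) \<le> norm (1 / real n) * K" by simp
    qed
  qed
  then show ?thesis using False by simp
qed


lemma triple_index: fixes X N Y :: "complex mat"
  assumes X: "X \<in> carrier_mat d d" and N: "N \<in> carrier_mat d d" and Y: "Y \<in> carrier_mat d d" and i: "i < d" and k: "k < d"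
  shows "(X * N * Y) $$ (i,k) = (\<Sum>a<d. \<Sum>b<d. X $$ (i,a) * N $$ (a,b) * Y $$ (b,k))"
proof -
  have XN: "\<And>b. b < d \<Longrightarrow> (X * N) $$ (i,b) = (\<Sum>a<d. X $$ (i,a) * N $$ (a,b))"
    using X N i by (subst mult_index_sum) auto
  have "(X * N * Y) $$ (i,k) = (\<Sum>b<d. (X * N) $$ (i,b) * Y $$ (b,k))"
    using X N Y i k by (subst mult_index_sum) auto
  also have "\<dots> = (\<Sum>b<d. \<Sum>a<d. X $$ (i,a) * N $$ (a,b) * Y $$ (b,k))"
    by (intro sum.cong refl) (simp add: XN sum_distrib_right)
  also have "\<dots> = (\<Sum>a<d. \<Sum>b<d. X $$ (i,a) * N $$ (a,b) * Y $$ (b,k))" by (rule sum.swap)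
  finally show ?thesis .
qed

lemma sum3_swap: "(\<Sum>j\<in>J. \<Sum>a\<in>A. \<Sum>b\<in>B. f j a b) = (\<Sum>a\<in>A. \<Sum>b\<in>B. \<Sum>j\<in>J. f j a b)"
proof -
  have "(\<Sum>j\<in>J. \<Sum>a\<in>A. \<Sum>b\<in>B. f j a b) = (\<Sum>a\<in>A. \<Sum>j\<in>J. \<Sum>b\<in>B. f j a b)" by (rule sum.swap)
  also have "\<dots> = (\<Sum>a\<in>A. \<Sum>b\<in>B. \<Sum>j\<in>J. f j a b)" by (intro sum.cong refl) (rule sum.swap)
  finally show ?thesis .
qed

lemma T_cesaro: assumes S: "S \<in> carrier_mat d d" and R: "R \<in> carrier_mat d d"
    and SR: "S * R = 1\<^sub>m d" and RS: "R * S = 1\<^sub>m d" and u: "\<forall>a<d. cmod (u a) = 1"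
    and inj: "\<forall>a<d. \<forall>b<d. (cnj (u a) * u b = 1) = (a = b)"
    and M1: "\<forall>a<d. (mat_adjoint S * S) $$ (a,a) = 1"
  shows "is_cesaro_limit d (S * diagm d u * R) (mat_adjoint R * R)"
proof -
  define T where "T = S * diagm d u * R"
  define M where "M = mat_adjoint S * S"
  have aS: "mat_adjoint S \<in> carrier_mat d d" and aR: "mat_adjoint R \<in> carrier_mat d d" using S R by auto
  have M: "M \<in> carrier_mat d d" unfolding M_def using S by simp
  have aRaS: "mat_adjoint R * mat_adjoint S = 1\<^sub>m d" using madj_mult[of S R] SR S R by simp
  have aSaR: "mat_adjoint S * mat_adjoint R = 1\<^sub>m d" using madj_mult[of R S] RS S R by simp
  have aT: "mat_adjoint T = mat_adjoint R * diagm d (\<lambda>a. cnj (u a)) * mat_adjoint S"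
  proof -
    have "mat_adjoint T = mat_adjoint R * (mat_adjoint (diagm d u) * mat_adjoint S)"
      unfolding T_def using S R by (simp add: madj_mult)
    then show ?thesis unfolding diagm_adj using aR aS by (simp add: assoc_sq[of _ d])
  qed
  have Ej: "mat_adjoint T ^\<^sub>m j * T ^\<^sub>m j = mat_adjoint R * (diagm d (\<lambda>a. cnj (u a) ^ j) * M * diagm d (\<lambda>a. u a ^ j)) * R" for j
    unfolding aT unfolding T_def T_pow[OF aR aS aRaS aSaR] T_pow[OF S R SR RS] M_def
    using S R aS aR by (simp add: assoc_sq[of _ d])
  have Nidx: "(diagm d (\<lambda>a. cnj (u a) ^ j) * M * diagm d (\<lambda>a. u a ^ j)) $$ (a,b) = M $$ (a,b) * (cnj (u a) * u b) ^ j"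
    if a: "a < d" and b: "b < d" for a b j
  proof -
    have "(diagm d (\<lambda>a. cnj (u a) ^ j) * M * diagm d (\<lambda>a. u a ^ j)) $$ (a,b) = 
       (diagm d (\<lambda>a. cnj (u a) ^ j) * M) $$ (a,b) * u b ^ j"
      by (rule diagm_mult_right_index) (use M a b in auto)
    also have "\<dots> = cnj (u a) ^ j * M $$ (a,b) * u b ^ j" by (subst diagm_mult_left_index[OF M a b]) simp
    finally show ?thesis by (simp add: power_mult_distrib)
  qed
  define c where "c i k a b = cnj (R $$ (a,i)) * M $$ (a,b) * R $$ (b,k)" for i k a b
  define w where "w a b = cnj (u a) * u b" for a b
  have Eidx: "(mat_adjoint T ^\<^sub>m j * T ^\<^sub>m j) $$ (i,k) = (\<Sum>a<d. \<Sum>b<d. c i k a b * w a b ^ j)"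
    if i: "i < d" and k: "k < d" for i k j
  proof -
    let ?N = "diagm d (\<lambda>a. cnj (u a) ^ j) * M * diagm d (\<lambda>a. u a ^ j)"
    have N: "?N \<in> carrier_mat d d" using M by simp
    have "(mat_adjoint T ^\<^sub>m j * T ^\<^sub>m j) $$ (i,k) = (\<Sum>a<d. \<Sum>b<d. mat_adjoint R $$ (i,a) * ?N $$ (a,b) * R $$ (b,k))"
      unfolding Ej by (rule triple_index[OF aR N R i k])
    also have "\<dots> = (\<Sum>a<d. \<Sum>b<d. c i k a b * w a b ^ j)"
    proof (intro sum.cong refl)
      fix a b assume a: "a \<in> {..<d}" and b: "b \<in> {..<d}"
      have "mat_adjoint R $$ (i,a) = cnj (R $$ (a,i))" using R i a by simp
      moreover have "?N $$ (a,b) = M $$ (a,b) * (cnj (u a) * u b) ^ j" using Nidx a b by simp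
      ultimately show "mat_adjoint R $$ (i,a) * ?N $$ (a,b) * R $$ (b,k) = c i k a b * w a b ^ j"
        unfolding c_def w_def by (simp add: mult_ac)
    qed
    finally show ?thesis .
  qed
  show ?thesis unfolding is_cesaro_limit_def T_def[symmetric]
  proof (intro conjI allI impI)
    show "mat_adjoint R * R \<in> carrier_mat d d" using R by simp
    fix i k assume i: "i < d" and k: "k < d"
    have seq: "(1 / of_nat n) * (\<Sum>j=1..n. (mat_adjoint T ^\<^sub>m j * T ^\<^sub>m j) $$ (i,k))
       = (\<Sum>a<d. \<Sum>b<d. c i k a b * ((1 / of_nat n) * (\<Sum>j=1..n. w a b ^ j)))" for n
    proof -
      have "(1 / of_nat n) * (\<Sum>j=1..n. (mat_adjoint T ^\<^sub>m j * T ^\<^sub>m j) $$ (i,k))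
         = (\<Sum>j=1..n. \<Sum>a<d. \<Sum>b<d. (1 / of_nat n) * (c i k a b * w a b ^ j))"
        unfolding Eidx[OF i k] by (simp add: sum_distrib_left)
      also have "\<dots> = (\<Sum>a<d. \<Sum>b<d. \<Sum>j=1..n. (1 / of_nat n) * (c i k a b * w a b ^ j))"
        by (rule sum3_swap)
      also have "\<dots> = (\<Sum>a<d. \<Sum>b<d. c i k a b * ((1 / of_nat n) * (\<Sum>j=1..n. w a b ^ j)))"
        by (simp add: sum_distrib_left mult_ac)
      finally show ?thesis .
    qed
    have lim: "(\<lambda>n. \<Sum>a<d. \<Sum>b<d. c i k a b * ((1 / of_nat n) * (\<Sum>j=1..n. w a b ^ j)))
       \<longlonglongrightarrow> (\<Sum>a<d. \<Sum>b<d. c i k a b * (if w a b = 1 then 1 else 0))"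
    proof (intro tendsto_sum tendsto_mult_left)
      fix a b assume "a \<in> {..<d}" "b \<in> {..<d}"
      then have "cmod (w a b) = 1" using u unfolding w_def by (simp add: norm_mult)
      then show "(\<lambda>n. (1 / of_nat n) * (\<Sum>j=1..n. w a b ^ j)) \<longlonglongrightarrow> (if w a b = 1 then 1 else 0)"
        by (rule cesaro_geom)
    qed
    have "(\<Sum>a<d. \<Sum>b<d. c i k a b * (if w a b = 1 then 1 else 0)) = (\<Sum>a<d. \<Sum>b<d. if a = b then c i k a b else 0)"
      using inj unfolding w_def by (intro sum.cong refl) auto
    also have "\<dots> = (\<Sum>a<d. c i k a a)" by simp
    also have "\<dots> = (\<Sum>a<d. cnj (R $$ (a,i)) * R $$ (a,k))" using M1 unfolding c_def M_def by simp
    also have "\<dots> = (mat_adjoint R * R) $$ (i,k)" using R i k by (subst mult_index_sum) auto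
    finally show "(\<lambda>n. (1 / of_nat n) * (\<Sum>j=1..n. (mat_adjoint T ^\<^sub>m j * T ^\<^sub>m j) $$ (i,k))) \<longlonglongrightarrow> (mat_adjoint R * R) $$ (i,k)"
      using lim unfolding seq by simp
  qed
qed


section \<open>From a Cesaro limit to the trace identity\<close>

lemma mv_unit: assumes M: "M \<in> carrier_mat m n" and a: "a < m" and b: "b < n"
  shows "(M *\<^sub>v unit_vec n b) $ a = (M $$ (a,b) :: complex)"
proof -
  have "(M *\<^sub>v unit_vec n b) $ a = (\<Sum>k<n. M $$ (a,k) * (if k = b then 1 else 0))"
    using M a b by (simp add: scalar_prod_def atLeast0LessThan)
  also have "\<dots> = (\<Sum>k<n. if b = k then M $$ (a,k) else 0)" by (intro sum.cong) auto
  also have "\<dots> = M $$ (a,b)" using b by (subst sum.delta') auto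
  finally show ?thesis .
qed

lemma norm_unit: assumes b: "b < n" shows "cvec_norm (unit_vec n b :: complex vec) = 1"
proof -
  have "(\<Sum>i<n. (cmod ((unit_vec n b :: complex vec) $ i))^2) = (\<Sum>i<n. if b = i then 1 else 0)"
    using b by (intro sum.cong) auto
  also have "\<dots> = 1" using b by (subst sum.delta') auto
  finally show ?thesis unfolding cvec_norm_sum using b by simp
qed

lemma pow_commute: fixes A :: "complex mat" assumes A: "A \<in> carrier_mat n n"
  shows "A ^\<^sub>m m * A = A * A ^\<^sub>m m"
proof (induct m)
  case 0 then show ?case using A by simp
next
  case (Suc m)
  have "A ^\<^sub>m Suc m * A = (A ^\<^sub>m m * A) * A" by simp
  also have "\<dots> = (A * A ^\<^sub>m m) * A" using Suc by simp
  also have "\<dots> = A * (A ^\<^sub>m m * A)" using A by (simp add: assoc_sq[of _ n])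
  finally show ?case by simp
qed

lemma adj_pow: fixes T :: "complex mat" assumes T: "T \<in> carrier_mat n n"
  shows "mat_adjoint (T ^\<^sub>m m) = mat_adjoint T ^\<^sub>m m"
proof (induct m)
  case 0 then show ?case using T by simp
next
  case (Suc m)
  have "mat_adjoint (T ^\<^sub>m Suc m) = mat_adjoint T * mat_adjoint (T ^\<^sub>m m)"
    using T by (simp add: madj_mult)
  also have "\<dots> = mat_adjoint T * mat_adjoint T ^\<^sub>m m" using Suc by simp
  also have "\<dots> = mat_adjoint T ^\<^sub>m m * mat_adjoint T" using pow_commute[of "mat_adjoint T" n m] T by simp
  finally show ?case by simp
qed

lemma sum_shift1: fixes f :: "nat \<Rightarrow> complex"
  shows "(\<Sum>j=1..n. f (Suc j)) = (\<Sum>j=1..n. f j) + f (Suc n) - f 1"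
  by (induct n) (auto simp: sum.cl_ivl_Suc)

lemma i_to_ii:
  assumes A: "A \<in> carrier_mat d d" and Ai: "Ainv \<in> carrier_mat d d"
    and AAi: "A * Ainv = 1\<^sub>m d" and AiA: "Ainv * A = 1\<^sub>m d"
    and pb: "power_bounded d T" and ces: "is_cesaro_limit d T A"
  shows "tr Ainv = of_nat d"
proof -
  from pb obtain C0 where T: "T \<in> carrier_mat d d"
    and C0: "\<forall>n. \<forall>v \<in> carrier_vec d. cvec_norm ((T ^\<^sub>m n) *\<^sub>v v) \<le> C0 * cvec_norm v"
    unfolding power_bounded_def by blast
  have aT: "mat_adjoint T \<in> carrier_mat d d" using T by simp
  define C where "C = max C0 0"
  have Cnn: "C \<ge> 0" unfolding C_def by simp
  have entry: "cmod ((T ^\<^sub>m m) $$ (a,b)) \<le> C" if a: "a < d" and b: "b < d" for m a b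
  proof -
    have "cmod ((T ^\<^sub>m m) $$ (a,b)) = cmod (((T ^\<^sub>m m) *\<^sub>v unit_vec d b) $ a)"
      using mv_unit[OF pow_carrier_mat[OF T] a b] by simp
    also have "\<dots> \<le> cvec_norm ((T ^\<^sub>m m) *\<^sub>v unit_vec d b)" using T a by (intro comp_le_norm) simp
    also have "\<dots> \<le> C0 * cvec_norm (unit_vec d b :: complex vec)" using C0 by simp
    also have "\<dots> \<le> C" using norm_unit[OF b] unfolding C_def by simp
    finally show ?thesis .
  qed
  define E where "E j = mat_adjoint T ^\<^sub>m j * T ^\<^sub>m j" for j
  have E: "E j \<in> carrier_mat d d" for j unfolding E_def using T aT by simp
  have E_alt: "E j = mat_adjoint (T ^\<^sub>m j) * T ^\<^sub>m j" for j unfolding E_def adj_pow[OF T] ..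
  have Ebound: "cmod (E j $$ (i,k)) \<le> real d * C^2" if i: "i < d" and k: "k < d" for j i k
  proof -
    have "E j $$ (i,k) = (\<Sum>a<d. cnj ((T ^\<^sub>m j) $$ (a,i)) * (T ^\<^sub>m j) $$ (a,k))"
      unfolding E_alt using T i k by (subst mult_index_sum) auto
    then have "cmod (E j $$ (i,k)) \<le> (\<Sum>a<d. cmod (cnj ((T ^\<^sub>m j) $$ (a,i)) * (T ^\<^sub>m j) $$ (a,k)))"
      by (simp add: norm_sum)
    also have "\<dots> \<le> (\<Sum>a<d. C * C)"
    proof (intro sum_mono)
      fix a assume a: "a \<in> {..<d}"
      have "cmod (cnj ((T ^\<^sub>m j) $$ (a,i)) * (T ^\<^sub>m j) $$ (a,k)) = cmod ((T ^\<^sub>m j) $$ (a,i)) * cmod ((T ^\<^sub>m j) $$ (a,k))"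
        by (simp add: norm_mult)
      also have "\<dots> \<le> C * C" using entry[of a i j] entry[of a k j] a i k Cnn by (intro mult_mono) auto
      finally show "cmod (cnj ((T ^\<^sub>m j) $$ (a,i)) * (T ^\<^sub>m j) $$ (a,k)) \<le> C * C" .
    qed
    also have "\<dots> = real d * C^2" by (simp add: power2_eq_square)
    finally show ?thesis .
  qed
  have ESuc: "E (Suc j) = mat_adjoint T * E j * T" for j
  proof -
    have "E (Suc j) = mat_adjoint (T ^\<^sub>m j * T) * (T ^\<^sub>m j * T)" unfolding E_alt by simp
    also have "\<dots> = mat_adjoint T * mat_adjoint (T ^\<^sub>m j) * (T ^\<^sub>m j * T)" using T by (simp add: madj_mult)
    also have "\<dots> = mat_adjoint T * E j * T" unfolding E_alt using T aT by (simp add: assoc_sq[of _ d])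
    finally show ?thesis .
  qed
  have lim: "(\<lambda>n. (1 / of_nat n) * (\<Sum>j=1..n. E j $$ (i,k))) \<longlonglongrightarrow> A $$ (i,k)" if "i < d" "k < d" for i k
    using ces that unfolding is_cesaro_limit_def E_def by blast
  have TAT: "mat_adjoint T * A * T = A"
  proof (rule eq_matI)
    fix i k assume "i < dim_row A" "k < dim_col A"
    then have i: "i < d" and k: "k < d" using A by auto
    have l1: "(\<lambda>n. (1 / of_nat n) * (\<Sum>j=1..n. E (Suc j) $$ (i,k))) \<longlonglongrightarrow> (mat_adjoint T * A * T) $$ (i,k)"
    proof -
      have eq: "(1 / of_nat n) * (\<Sum>j=1..n. E (Suc j) $$ (i,k)) = 
        (\<Sum>a<d. \<Sum>b<d. mat_adjoint T $$ (i,a) * ((1 / of_nat n) * (\<Sum>j=1..n. E j $$ (a,b))) * T $$ (b,k))" for n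
      proof -
        have "(1 / of_nat n) * (\<Sum>j=1..n. E (Suc j) $$ (i,k)) = 
          (1 / of_nat n) * (\<Sum>j=1..n. \<Sum>a<d. \<Sum>b<d. mat_adjoint T $$ (i,a) * E j $$ (a,b) * T $$ (b,k))"
          unfolding ESuc using triple_index[OF aT E T i k] by simp
        also have "\<dots> = (\<Sum>j=1..n. \<Sum>a<d. \<Sum>b<d. (1 / of_nat n) * (mat_adjoint T $$ (i,a) * E j $$ (a,b) * T $$ (b,k)))"
          by (simp add: sum_distrib_left)
        also have "\<dots> = (\<Sum>a<d. \<Sum>b<d. \<Sum>j=1..n. (1 / of_nat n) * (mat_adjoint T $$ (i,a) * E j $$ (a,b) * T $$ (b,k)))"
          by (rule sum3_swap)
        also have "\<dots> = (\<Sum>a<d. \<Sum>b<d. mat_adjoint T $$ (i,a) * ((1 / of_nat n) * (\<Sum>j=1..n. E j $$ (a,b))) * T $$ (b,k))"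
          by (simp add: sum_distrib_left sum_distrib_right mult_ac)
        finally show ?thesis .
      qed
      have "(\<lambda>n. \<Sum>a<d. \<Sum>b<d. mat_adjoint T $$ (i,a) * ((1 / of_nat n) * (\<Sum>j=1..n. E j $$ (a,b))) * T $$ (b,k))
         \<longlonglongrightarrow> (\<Sum>a<d. \<Sum>b<d. mat_adjoint T $$ (i,a) * A $$ (a,b) * T $$ (b,k))"
        by (intro tendsto_sum tendsto_mult tendsto_const lim) auto
      then show ?thesis unfolding eq using triple_index[OF aT A T i k] by simp
    qed
    have l2: "(\<lambda>n. (1 / of_nat n) * (\<Sum>j=1..n. E (Suc j) $$ (i,k))) \<longlonglongrightarrow> A $$ (i,k) + 0"
    proof -
      have eq: "(1 / of_nat n) * (\<Sum>j=1..n. E (Suc j) $$ (i,k)) =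
         (1 / of_nat n) * (\<Sum>j=1..n. E j $$ (i,k)) + (1 / of_nat n) * (E (Suc n) $$ (i,k) - E 1 $$ (i,k))" for n
      proof -
        have h: "(\<Sum>j=1..n. E (Suc j) $$ (i,k)) = (\<Sum>j=1..n. E j $$ (i,k)) + (E (Suc n) $$ (i,k) - E 1 $$ (i,k))"
          using sum_shift1[of "\<lambda>j. E j $$ (i,k)" n] by simp
        show ?thesis unfolding h by (simp only: distrib_left)
      qed
      have z: "(\<lambda>n. (1 / of_nat n) * (E (Suc n) $$ (i,k) - E 1 $$ (i,k))) \<longlonglongrightarrow> (0::complex)"
      proof (rule tendsto_0_le[OF lim_inverse_n', of _ "2 * (real d * C^2)"])
        show "\<forall>\<^sub>F n in sequentially. norm ((1 / of_nat n) * (E (Suc n) $$ (i,k) - E 1 $$ (i,k))) \<le> norm (1 / real n) * (2 * (real d * C^2))"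
        proof (intro always_eventually allI)
          fix n :: nat
          have "cmod (E (Suc n) $$ (i,k) - E 1 $$ (i,k)) \<le> cmod (E (Suc n) $$ (i,k)) + cmod (E 1 $$ (i,k))"
            by (rule norm_triangle_ineq4)
          also have "\<dots> \<le> 2 * (real d * C^2)" using Ebound[OF i k, of "Suc n"] Ebound[OF i k, of 1] by simp
          finally have b: "cmod (E (Suc n) $$ (i,k) - E 1 $$ (i,k)) \<le> 2 * (real d * C^2)" .
          have "norm ((1 / of_nat n) * (E (Suc n) $$ (i,k) - E 1 $$ (i,k))) = (1 / real n) * cmod (E (Suc n) $$ (i,k) - E 1 $$ (i,k))"
            by (simp add: norm_mult norm_divide)
          also have "\<dots> \<le> (1 / real n) * (2 * (real d * C^2))" using b by (intro mult_left_mono) auto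
          finally show "norm ((1 / of_nat n) * (E (Suc n) $$ (i,k) - E 1 $$ (i,k))) \<le> norm (1 / real n) * (2 * (real d * C^2))"
            by simp
        qed
      qed
      show ?thesis unfolding eq by (intro tendsto_add lim[OF i k] z)
    qed
    from LIMSEQ_unique[OF l1 l2] show "(mat_adjoint T * A * T) $$ (i,k) = A $$ (i,k)" by simp
  qed (use A T in auto)
  define L where "L = Ainv * mat_adjoint T * A"
  have L: "L \<in> carrier_mat d d" unfolding L_def using Ai aT A by simp
  have "L * T = Ainv * (mat_adjoint T * A * T)" unfolding L_def using Ai aT A T by (simp add: assoc_sq[of _ d])
  also have "\<dots> = 1\<^sub>m d" unfolding TAT by (rule AiA)
  finally have "T * L = 1\<^sub>m d" using mat_mult_left_right_inverse[OF L T] by simp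
  then have TAiT': "T * Ainv * mat_adjoint T = Ainv"
  proof -
    assume TL: "T * L = 1\<^sub>m d"
    have "T * Ainv * mat_adjoint T = T * Ainv * mat_adjoint T * (A * Ainv)" using AAi T Ai aT by simp
    also have "\<dots> = (T * L) * Ainv" unfolding L_def using T Ai aT A by (simp add: assoc_sq[of _ d])
    also have "\<dots> = Ainv" unfolding TL using Ai by simp
    finally show ?thesis .
  qed
  have invar: "T ^\<^sub>m j * Ainv * mat_adjoint (T ^\<^sub>m j) = Ainv" for j
  proof (induct j)
    case 0 then show ?case using Ai T by simp
  next
    case (Suc j)
    have "T ^\<^sub>m Suc j * Ainv * mat_adjoint (T ^\<^sub>m Suc j) = T ^\<^sub>m j * (T * Ainv * mat_adjoint T) * mat_adjoint (T ^\<^sub>m j)"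
      using T aT Ai by (simp add: madj_mult assoc_sq[of _ d])
    also have "\<dots> = Ainv" unfolding TAiT' using Suc by simp
    finally show ?case .
  qed
  have trE: "tr (Ainv * E j) = tr Ainv" for j
  proof -
    have "tr (Ainv * E j) = tr ((Ainv * mat_adjoint (T ^\<^sub>m j)) * T ^\<^sub>m j)"
      unfolding E_alt using Ai T by (simp add: assoc_sq[of _ d])
    also have "\<dots> = tr (T ^\<^sub>m j * (Ainv * mat_adjoint (T ^\<^sub>m j)))" by (rule tr_comm[of _ d d]) (use Ai T in simp_all)
    also have "\<dots> = tr Ainv" using invar[of j] Ai T by (simp add: assoc_sq[of _ d])
    finally show ?thesis .
  qed
  have trsum: "tr (Ainv * X) = (\<Sum>i<d. \<Sum>k<d. Ainv $$ (i,k) * X $$ (k,i))" if X: "X \<in> carrier_mat d d" for X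
    unfolding tr_def using Ai X by (intro sum.cong) (auto simp: scalar_prod_def atLeast0LessThan)
  have l1: "(\<lambda>n. \<Sum>i<d. \<Sum>k<d. Ainv $$ (i,k) * ((1 / of_nat n) * (\<Sum>j=1..n. E j $$ (k,i)))) \<longlonglongrightarrow> 
      (\<Sum>i<d. \<Sum>k<d. Ainv $$ (i,k) * A $$ (k,i))"
    by (intro tendsto_sum tendsto_mult tendsto_const lim) auto
  have "(\<Sum>i<d. \<Sum>k<d. Ainv $$ (i,k) * A $$ (k,i)) = of_nat d"
    using trsum[OF A] AiA by simp
  note l1 = l1[unfolded this]
  have ev: "\<forall>\<^sub>F n in sequentially. (\<Sum>i<d. \<Sum>k<d. Ainv $$ (i,k) * ((1 / of_nat n) * (\<Sum>j=1..n. E j $$ (k,i)))) = tr Ainv"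
    unfolding eventually_sequentially
  proof (intro exI[of _ 1] allI impI)
    fix n :: nat assume n: "n \<ge> 1"
    have "(\<Sum>i<d. \<Sum>k<d. Ainv $$ (i,k) * ((1 / of_nat n) * (\<Sum>j=1..n. E j $$ (k,i))))
       = (1 / of_nat n) * (\<Sum>j=1..n. \<Sum>i<d. \<Sum>k<d. Ainv $$ (i,k) * E j $$ (k,i))"
    proof -
      have "(\<Sum>i<d. \<Sum>k<d. Ainv $$ (i,k) * ((1 / of_nat n) * (\<Sum>j=1..n. E j $$ (k,i))))
          = (\<Sum>i<d. \<Sum>k<d. \<Sum>j=1..n. (1 / of_nat n) * (Ainv $$ (i,k) * E j $$ (k,i)))"
        by (simp add: sum_distrib_left mult_ac)
      also have "\<dots> = (\<Sum>j=1..n. \<Sum>i<d. \<Sum>k<d. (1 / of_nat n) * (Ainv $$ (i,k) * E j $$ (k,i)))"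
        by (rule sum3_swap[symmetric])
      also have "\<dots> = (1 / of_nat n) * (\<Sum>j=1..n. \<Sum>i<d. \<Sum>k<d. Ainv $$ (i,k) * E j $$ (k,i))"
        by (simp add: sum_distrib_left)
      finally show ?thesis .
    qed
    also have "\<dots> = (1 / of_nat n) * (\<Sum>j=1..n. tr Ainv)" using trsum[OF E] trE by simp
    also have "\<dots> = tr Ainv" using n by simp
    finally show "(\<Sum>i<d. \<Sum>k<d. Ainv $$ (i,k) * ((1 / of_nat n) * (\<Sum>j=1..n. E j $$ (k,i)))) = tr Ainv" .
  qed
  have "(\<lambda>n. \<Sum>i<d. \<Sum>k<d. Ainv $$ (i,k) * ((1 / of_nat n) * (\<Sum>j=1..n. E j $$ (k,i)))) \<longlonglongrightarrow> tr Ainv"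
    by (rule tendsto_eventually[OF ev])
  from LIMSEQ_unique[OF this l1] show ?thesis .
qed


lemma iii_to_i:
  assumes A: "A \<in> carrier_mat d d" and herm: "mat_adjoint A = A" and d: "d > 0"
    and S: "S \<in> carrier_mat d d" and AS: "A * (S * mat_adjoint S) = 1\<^sub>m d"
    and cols: "\<forall>j<d. cvec_norm (col S j) = 1"
  shows "\<exists>T. power_bounded d T \<and> class_C11 d T \<and> is_cesaro_limit d T A"
proof -
  have aS: "mat_adjoint S \<in> carrier_mat d d" using S by simp
  define R where "R = mat_adjoint S * A"
  have R: "R \<in> carrier_mat d d" unfolding R_def using aS A by simp
  have aR: "mat_adjoint R \<in> carrier_mat d d" using R by simp
  have SSA: "(S * mat_adjoint S) * A = 1\<^sub>m d" using mat_mult_left_right_inverse[OF A _ AS] S aS by simp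
  have SR: "S * R = 1\<^sub>m d" unfolding R_def using SSA S aS A by (simp add: assoc_sq[of _ d])
  have RS: "R * S = 1\<^sub>m d" using mat_mult_left_right_inverse[OF S R SR] .
  have aRaS: "mat_adjoint R * mat_adjoint S = 1\<^sub>m d" using madj_mult[of S R] SR S R by simp
  have aSaR: "mat_adjoint S * mat_adjoint R = 1\<^sub>m d" using madj_mult[of R S] RS S R by simp
  define u where "u a = cis (2 * pi * real a / real d)" for a
  have u1: "\<forall>a<d. cmod (u a) = 1" unfolding u_def by simp
  have u1': "\<forall>a<d. cmod (cnj (u a)) = 1" unfolding u_def by simp
  have inj: "\<forall>a<d. \<forall>b<d. (cnj (u a) * u b = 1) = (a = b)"
  proof (intro allI impI)
    fix a b assume a: "a < d" and b: "b < d"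
    have "cnj (u a) * u b = cis (- (2 * pi * real a / real d) + 2 * pi * real b / real d)"
      unfolding u_def by (simp only: cis_cnj cis_mult)
    also have "- (2 * pi * real a / real d) + 2 * pi * real b / real d = 2 * pi * of_int (int b - int a) / real d"
      using d by (simp add: field_simps)
    finally have eq: "cnj (u a) * u b = cis (2 * pi * of_int (int b - int a) / real d)" .
    show "(cnj (u a) * u b = 1) = (a = b)"
    proof
      assume "cnj (u a) * u b = 1"
      moreover have "\<bar>int b - int a\<bar> < int d" using a b by auto
      ultimately show "a = b" using cis_ne_1[OF d, of "int b - int a"] eq by (cases "a = b") auto
    next
      assume "a = b" then show "cnj (u a) * u b = 1" using eq by simp
    qed
  qed
  have M1: "\<forall>a<d. (mat_adjoint S * S) $$ (a,a) = 1"
  proof (intro allI impI)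
    fix a assume a: "a < d"
    have "(mat_adjoint S * S) $$ (a,a) = col S a \<bullet>c col S a" by (rule adj_mult_index[OF S S a a])
    then show "(mat_adjoint S * S) $$ (a,a) = 1" using cvec_norm_sq[of "col S a"] cols a by simp
  qed
  define T where "T = S * diagm d u * R"
  have aT: "mat_adjoint T = mat_adjoint R * diagm d (\<lambda>a. cnj (u a)) * mat_adjoint S"
  proof -
    have "mat_adjoint T = mat_adjoint R * (mat_adjoint (diagm d u) * mat_adjoint S)"
      unfolding T_def using S R by (simp add: madj_mult)
    then show ?thesis unfolding diagm_adj using aR aS by (simp add: assoc_sq[of _ d])
  qed
  have pb: "power_bounded d T" and c1: "class_C1dot d T"
    using T_props[OF S R SR RS u1] unfolding T_def by auto
  have c2: "class_C1dot d (mat_adjoint T)"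
    unfolding aT by (rule T_props(2)[OF aR aS aRaS aSaR u1'])
  have ces: "is_cesaro_limit d T (mat_adjoint R * R)"
    unfolding T_def by (rule T_cesaro[OF S R SR RS u1 inj M1])
  have "mat_adjoint R * R = A * (S * mat_adjoint S) * A"
    unfolding R_def using S A herm by (simp add: madj_mult assoc_sq[of _ d])
  also have "\<dots> = A" unfolding AS using A by simp
  finally have "is_cesaro_limit d T A" using ces by simp
  then show ?thesis using pb c1 c2 unfolding class_C11_def class_Cdot1_def by blast
qed

theorem mainTheorem7:
  fixes d :: nat and A :: "complex mat" and ts :: "real list"
  assumes "d \<ge> 2"
    and "positive_definite d A"
    and "length ts = d"
    and "char_poly A = (\<Prod>t\<leftarrow>ts. [:- complex_of_real t, 1:])"
  shows "((\<exists>T. power_bounded d T \<and> class_C11 d T \<and> is_cesaro_limit d T A)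
           \<longleftrightarrow> (\<Sum>t\<leftarrow>ts. 1 / t) = real d)
       \<and> ((\<Sum>t\<leftarrow>ts. 1 / t) = real d
           \<longleftrightarrow> (\<exists>S. S \<in> carrier_mat d d \<and> invertible_mat S \<and>
                 (\<forall>j<d. cvec_norm (col S j) = 1) \<and>
                 A * (S * mat_adjoint S) = 1\<^sub>m d))"
proof -
  have d: "d > 0" using assms(1) by simp
  have A: "A \<in> carrier_mat d d" and herm: "mat_adjoint A = A"
    using assms(2) unfolding positive_definite_def by auto
  obtain U where uU: "unitary_mat d U" and AU: "mat_adjoint U * A * U = diagm d (\<lambda>i. complex_of_real (ts ! i))"
    and pos: "\<forall>i<d. ts ! i > 0"
    using spectral[OF assms(2,3,4)] by blast
  define Ainv where "Ainv = U * diagm d (\<lambda>i. 1 / complex_of_real (ts ! i)) * mat_adjoint U"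
  note inv = inverse_setup[OF uU A AU pos, folded Ainv_def]
  have iii_ii: "(\<Sum>t\<leftarrow>ts. 1 / t) = real d \<longleftrightarrow> (\<exists>S. S \<in> carrier_mat d d \<and> invertible_mat S \<and>
                 (\<forall>j<d. cvec_norm (col S j) = 1) \<and> A * (S * mat_adjoint S) = 1\<^sub>m d)"
  proof
    assume "(\<Sum>t\<leftarrow>ts. 1 / t) = real d"
    then show "\<exists>S. S \<in> carrier_mat d d \<and> invertible_mat S \<and>
                 (\<forall>j<d. cvec_norm (col S j) = 1) \<and> A * (S * mat_adjoint S) = 1\<^sub>m d"
      by (rule ii_to_iii[OF uU A AU pos assms(3) d])
  next
    assume "\<exists>S. S \<in> carrier_mat d d \<and> invertible_mat S \<and>
                 (\<forall>j<d. cvec_norm (col S j) = 1) \<and> A * (S * mat_adjoint S) = 1\<^sub>m d"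
    then obtain S where S: "S \<in> carrier_mat d d" and cols: "\<forall>j<d. cvec_norm (col S j) = 1"
      and AS: "A * (S * mat_adjoint S) = 1\<^sub>m d" by blast
    show "(\<Sum>t\<leftarrow>ts. 1 / t) = real d" by (rule iii_to_ii[OF uU A AU pos assms(3) S AS cols])
  qed
  have i_ii: "(\<exists>T. power_bounded d T \<and> class_C11 d T \<and> is_cesaro_limit d T A) \<longleftrightarrow> (\<Sum>t\<leftarrow>ts. 1 / t) = real d"
  proof
    assume "\<exists>T. power_bounded d T \<and> class_C11 d T \<and> is_cesaro_limit d T A"
    then obtain T where pb: "power_bounded d T" and ces: "is_cesaro_limit d T A" by blast
    have "tr Ainv = of_nat d" by (rule i_to_ii[OF A inv(1) inv(2) inv(3) pb ces])
    then have "complex_of_real (\<Sum>t\<leftarrow>ts. 1 / t) = complex_of_real (real d)"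
      using inv(4) sum_ts_complex[OF assms(3)] by simp
    then show "(\<Sum>t\<leftarrow>ts. 1 / t) = real d" by (simp only: of_real_eq_iff)
  next
    assume "(\<Sum>t\<leftarrow>ts. 1 / t) = real d"
    then obtain S where S: "S \<in> carrier_mat d d" and cols: "\<forall>j<d. cvec_norm (col S j) = 1"
      and AS: "A * (S * mat_adjoint S) = 1\<^sub>m d" using iii_ii by blast
    show "\<exists>T. power_bounded d T \<and> class_C11 d T \<and> is_cesaro_limit d T A"
      by (rule iii_to_i[OF A herm d S AS cols])
  qed
  show ?thesis using i_ii iii_ii by blast
qed

end
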